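(* Let $g\ge2$, $1\le k<g$, and let $\Gamma\subset\operatorname{Sp}(2g,\mathbb{Z})$ be a congruence subgroup. Let $A_1,\dots,A_k:\mathbb{H}_g\to\operatorname{Sym}_g(\mathbb{C})$ be holomorphic with \[ A_i(\gamma\cdot\tau)=\det(C\tau+D)\,(C\tau+D)\,A_i(\tau)\,{}^t(C\tau+D)\qquad(\gamma\in\Gamma,\ \tau\in\mathbb{H}_g), \] i.e. $A_i\in[\Gamma,\rho_1]$. Then $F=A_1\ast\dots\ast A_k$ (a matrix-valued function indexed by $P^*_{g-k}(X_g)$) is in $[\Gamma,\rho_k]$, i.e. \[ F(\gamma\cdot\tau)=\det(M)^{k+2}\,{}^t\big(\textstyle\bigwedge^{g-k}M\big)^{-1}\,F(\tau)\,\big(\textstyle\bigwedge^{g-k}M\big)^{-1},\qquad M=C\tau+D, \] for all $\gamma\in\Gamma$, $\tau\in\mathbb{H}_g$. (Here $\rho_k$ has highest weight $(k+2,\dots,k+2,k,\dots,k)$ with $k$ entries equal to $k+2$.)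
   Context: $\mathbb{H}_g$ is the Siegel upper half space; $\gamma=\begin{pmatrix}A&B\\C&D\end{pmatrix}\in\operatorname{Sp}(2g,\mathbb{Z})$ acts by $\gamma\cdot\tau=(A\tau+B)(C\tau+D)^{-1}$. $X_g=\{1,\dots,g\}$, $P^*_p(X)$ is the set of $p$-element subsets of $X$ written increasingly; $\bigwedge^pM$ is the matrix indexed by $P^*_p(X_g)$ with entries $(\bigwedge^pM)^I_J=\det M(I,J)$. For $A$ on $\bigwedge^p\mathbb{C}^g$, $B$ on $\bigwedge^q\mathbb{C}^g$ (matrices indexed by $P^*_p$, $P^*_q$), $p+q\le g$: \[ (A\sqcap B)^H_K=\binom{p+q}{p}^{-1}\sum_{I\in P^*_p(H),\,J\in P^*_p(K)}(-1)^{s_H(I)+s_K(J)}A^I_J\,B^{H\setminus I}_{K\setminus J}, \] with $s_H(I)$ the sum of positions of elements of $I$ within $H$; iterated products are left to right. For $g\times g$ matrices, $(A_1\ast\dots\ast A_k)^I_J=(-1)^{|I|_\Sigma+|J|_\Sigma}(A_1\sqcap\dots\sqcap A_k)^{X_g\setminus I}_{X_g\setminus J}$ for $I,J\in P^*_{g-k}(X_g)$, where $|I|_\Sigma$ is the sum of the elements of $I$. *)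

theory Defs
  imports "HOL-Analysis.Analysis"
begin

(* g x g matrices: index type 'n (finite, linearly ordered), g = CARD('n).
   The elements of 'n in increasing order play the role of X_g = {1,...,g}. *)

type_synonym ('a,'n) sqmat = "'a^'n^'n"

definition cmat :: "int^'n^'n \<Rightarrow> complex^'n^'n" where
  "cmat M = (\<chi> i j. of_int (M$i$j))"

definition cim :: "complex^'n^'n \<Rightarrow> real^'n^'n" where
  "cim M = (\<chi> i j. Im (M$i$j))"

definition siegel :: "(complex^'n::finite^'n) set" where
  "siegel = {\<tau>. transpose \<tau> = \<tau> \<and>
      (\<forall>x::real^'n. x \<noteq> 0 \<longrightarrow> x \<bullet> (cim \<tau> *v x) > 0)}"

(* Elements of Sp(2g,Z) written in g x g blocks gamma = (A,B,C,D);
   condition  ^t gamma J gamma = J  with J = [[0,I],[-I,0]], written blockwise. *)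
type_synonym 'n blk = "(int^'n^'n) \<times> (int^'n^'n) \<times> (int^'n^'n) \<times> (int^'n^'n)"

definition Sp :: "('n::finite) blk set" where
  "Sp = {(A,B,C,D).
      transpose A ** C - transpose C ** A = 0 \<and>
      transpose A ** D - transpose C ** B = mat 1 \<and>
      transpose B ** C - transpose D ** A = - mat 1 \<and>
      transpose B ** D - transpose D ** B = 0}"

definition blk_mult :: "('n::finite) blk \<Rightarrow> 'n blk \<Rightarrow> 'n blk" where
  "blk_mult \<gamma> \<delta> = (case \<gamma> of (A,B,C,D) \<Rightarrow> case \<delta> of (A',B',C',D') \<Rightarrow>
      (A ** A' + B ** C', A ** B' + B ** D', C ** A' + D ** C', C ** B' + D ** D'))"

definition blk_one :: "('n::finite) blk" where
  "blk_one = (mat 1, 0, 0, mat 1)"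

definition princ_cong :: "nat \<Rightarrow> ('n::finite) blk set" where
  "princ_cong N = {(A,B,C,D) \<in> Sp. \<forall>i j.
      int N dvd (A$i$j - (mat 1 :: int^'n^'n)$i$j) \<and> int N dvd B$i$j \<and>
      int N dvd C$i$j \<and> int N dvd (D$i$j - (mat 1 :: int^'n^'n)$i$j)}"

definition subgroup_Sp :: "('n::finite) blk set \<Rightarrow> bool" where
  "subgroup_Sp G \<longleftrightarrow> G \<subseteq> Sp \<and> blk_one \<in> G \<and>
     (\<forall>x\<in>G. \<forall>y\<in>G. blk_mult x y \<in> G) \<and>
     (\<forall>x\<in>G. \<exists>y\<in>G. blk_mult x y = blk_one \<and> blk_mult y x = blk_one)"

definition congruence_subgroup :: "('n::finite) blk set \<Rightarrow> bool" where
  "congruence_subgroup G \<longleftrightarrow> subgroup_Sp G \<and> (\<exists>N\<ge>1. princ_cong N \<subseteq> G)"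

definition aut_factor :: "('n::finite) blk \<Rightarrow> complex^'n^'n \<Rightarrow> complex^'n^'n" where
  "aut_factor \<gamma> \<tau> = (case \<gamma> of (A,B,C,D) \<Rightarrow> cmat C ** \<tau> + cmat D)"

definition sp_act :: "('n::finite) blk \<Rightarrow> complex^'n^'n \<Rightarrow> complex^'n^'n" where
  "sp_act \<gamma> \<tau> = (case \<gamma> of (A,B,C,D) \<Rightarrow>
      (cmat A ** \<tau> + cmat B) ** matrix_inv (cmat C ** \<tau> + cmat D))"

(* holomorphic on H_g: complex (Frechet) differentiable at every point of H_g
   (as a function on the open subset H_g of Sym_g(C)), i.e. real derivative
   within H_g which is complex linear *)
definition cscale :: "complex \<Rightarrow> complex^'n^'n \<Rightarrow> complex^'n^'n" where
  "cscale c M = (\<chi> i j. c * M$i$j)"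

definition holomorphic_siegel :: "(complex^'n^'n \<Rightarrow> complex^'n^'n) \<Rightarrow> bool" where
  "holomorphic_siegel f \<longleftrightarrow> (\<forall>\<tau>\<in>siegel. \<exists>L. (f has_derivative L) (at \<tau> within siegel)
        \<and> (\<forall>c h. L (cscale c h) = cscale c (L h)))"

definition sym_valued :: "(complex^'n^'n \<Rightarrow> complex^'n^'n) \<Rightarrow> bool" where
  "sym_valued f \<longleftrightarrow> (\<forall>\<tau>\<in>siegel. transpose (f \<tau>) = f \<tau>)"

definition modular_rho1 :: "('n::finite) blk set \<Rightarrow> (complex^'n^'n \<Rightarrow> complex^'n^'n) \<Rightarrow> bool" where
  "modular_rho1 G f \<longleftrightarrow> holomorphic_siegel f \<and> sym_valued f \<and>
     (\<forall>\<gamma>\<in>G. \<forall>\<tau>\<in>siegel. f (sp_act \<gamma> \<tau>) =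
        cscale (det (aut_factor \<gamma> \<tau>))
          (aut_factor \<gamma> \<tau> ** f \<tau> ** transpose (aut_factor \<gamma> \<tau>)))"

(* ---- matrices on exterior powers: indexed by subsets of 'n ---- *)
type_synonym 'n wmat = "'n set \<Rightarrow> 'n set \<Rightarrow> complex"

definition Pp :: "nat \<Rightarrow> ('n::finite) set set" where
  "Pp p = {I. card I = p}"

(* position (1-based) of i within H, H written increasingly *)
definition pos :: "'n::{finite,linorder} set \<Rightarrow> 'n \<Rightarrow> nat" where
  "pos H i = card {j\<in>H. j \<le> i}"

definition s_pos :: "'n::{finite,linorder} set \<Rightarrow> 'n set \<Rightarrow> nat" where
  "s_pos H I = (\<Sum>i\<in>I. pos H i)"

(* |I|_Sigma: sum of the elements of I, elements of X_g numbered 1..g *)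
definition sum_elems :: "'n::{finite,linorder} set \<Rightarrow> nat" where
  "sum_elems I = (\<Sum>i\<in>I. pos UNIV i)"

definition det_sub :: "((complex, 'n::{finite,linorder}) vec, 'n) vec \<Rightarrow> 'n set \<Rightarrow> 'n set \<Rightarrow> complex" where
  "det_sub M I J = (let rI = sorted_list_of_set I; rJ = sorted_list_of_set J; p = card I in
      \<Sum>\<pi>\<in>{\<pi>. \<pi> permutes {0..<p}}. of_int (sign \<pi>) * (\<Prod>t<p. M $ (rI ! t) $ (rJ ! \<pi> t)))"

definition ext_pow :: "nat \<Rightarrow> ((complex, 'n::{finite,linorder}) vec, 'n) vec \<Rightarrow> 'n wmat" where
  "ext_pow p M = (\<lambda>I J. if I \<in> Pp p \<and> J \<in> Pp p then det_sub M I J else 0)"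

definition wmult :: "nat \<Rightarrow> ('n::finite) wmat \<Rightarrow> 'n wmat \<Rightarrow> 'n wmat" where
  "wmult p X Y = (\<lambda>H K. \<Sum>L\<in>Pp p. X H L * Y L K)"

definition wid :: "nat \<Rightarrow> ('n::finite) wmat" where
  "wid p = (\<lambda>H K. if H \<in> Pp p \<and> K \<in> Pp p \<and> H = K then 1 else 0)"

definition wtrans :: "('n::finite) wmat \<Rightarrow> 'n wmat" where
  "wtrans X = (\<lambda>H K. X K H)"

definition winv :: "nat \<Rightarrow> ('n::finite) wmat \<Rightarrow> 'n wmat" where
  "winv p X = (THE Y. (\<forall>H\<in>Pp p. \<forall>K\<in>Pp p. wmult p X Y H K = wid p H K \<and> wmult p Y X H K = wid p H K)
                  \<and> (\<forall>H K. H \<notin> Pp p \<or> K \<notin> Pp p \<longrightarrow> Y H K = 0))"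

definition lift1 :: "((complex, 'n::{finite,linorder}) vec, 'n) vec \<Rightarrow> 'n wmat" where
  "lift1 M = ext_pow 1 M"

definition sqcap :: "nat \<Rightarrow> nat \<Rightarrow> 'n::{finite,linorder} wmat \<Rightarrow> 'n wmat \<Rightarrow> 'n wmat" where
  "sqcap p q X Y = (\<lambda>H K. if H \<in> Pp (p+q) \<and> K \<in> Pp (p+q) then
      (1 / of_nat ((p+q) choose p)) *
      (\<Sum>I\<in>{I. I \<subseteq> H \<and> card I = p}. \<Sum>J\<in>{J. J \<subseteq> K \<and> card J = p}.
         (-1) ^ (s_pos H I + s_pos K J) * X I J * Y (H - I) (K - J))
    else 0)"

(* A_1 sqcap ... sqcap A_m, left to right (on wedge^m); only m >= 1 is used *)
fun sqcap_prod :: "(nat \<Rightarrow> ((complex, 'n::{finite,linorder}) vec, 'n) vec) \<Rightarrow> nat \<Rightarrow> 'n wmat" where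
  "sqcap_prod A 0 = wid 0"
| "sqcap_prod A (Suc 0) = lift1 (A 1)"
| "sqcap_prod A (Suc (Suc m)) = sqcap (Suc m) 1 (sqcap_prod A (Suc m)) (lift1 (A (Suc (Suc m))))"

definition star_prod :: "(nat \<Rightarrow> ((complex, 'n::{finite,linorder}) vec, 'n) vec) \<Rightarrow> nat \<Rightarrow> 'n wmat" where
  "star_prod A k = (\<lambda>I J. if I \<in> Pp (CARD('n) - k) \<and> J \<in> Pp (CARD('n) - k) then
      (-1) ^ (sum_elems I + sum_elems J) * sqcap_prod A k (UNIV - I) (UNIV - J) else 0)"

end

theory Submission
  imports Defs
begin

definition invc :: "'a::linorder set \<Rightarrow> ('a \<Rightarrow> 'b::linorder) \<Rightarrow> nat" where
  "invc A f = card {(a,b). a\<in>A \<and> b\<in>A \<and> a<b \<and> f b < f a}"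

definition rot :: "nat \<Rightarrow> nat \<Rightarrow> nat \<Rightarrow> nat" where
  "rot m n t = (if t < m then t else if t < n then Suc t else if t = n then m else t)"

lemma rot_nn: "rot n n = id"
  by (auto simp: rot_def fun_eq_iff)

lemma rot_step: "m < n \<Longrightarrow> rot m n = Transposition.transpose m (Suc m) \<circ> rot (Suc m) n"
  by (auto simp: rot_def fun_eq_iff Transposition.transpose_def)

lemma rot_props: "m + d = n \<Longrightarrow> rot m n permutes {0..<Suc n} \<and> sign (rot m n) = (-1)^d"
proof (induction d arbitrary: m)
  case 0
  then show ?case using permutes_id[of "{0..<Suc n}"] by (simp add: rot_nn id_def)
next
  case (Suc d)
  then have mn: "m < n" by simp
  from Suc.IH[of "Suc m"] Suc.prems have IH: "rot (Suc m) n permutes {0..<Suc n}" "sign (rot (Suc m) n) = (-1)^d" by auto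
  have t: "Transposition.transpose m (Suc m) permutes {0..<Suc n}"
    using mn by (intro permutes_swap_id) auto
  have "rot m n permutes {0..<Suc n}" unfolding rot_step[OF mn]
    by (rule permutes_compose[OF IH(1) t])
  moreover have "sign (rot m n) = (-1)^Suc d" unfolding rot_step[OF mn]
    apply (subst sign_compose)
    using IH t permutes_imp_permutation[OF _ t] permutes_imp_permutation[OF _ IH(1)]
    by (auto simp: sign_swap_id)
  ultimately show ?case by simp
qed

lemma permutes_restrict_Suc:
  assumes "p permutes {0..<Suc n}" "p n = n" shows "p permutes {0..<n}"
  using assms unfolding permutes_def
  by (metis atLeastLessThan_iff less_Suc_eq)

lemma sign_invc_nat: fixes n :: nat shows "\<pi> permutes {0..<n} \<Longrightarrow> sign \<pi> = (-1::int)^(invc {0..<n} \<pi>)"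
proof (induction n arbitrary: \<pi>)
  case 0
  then have "\<pi> = id" by (simp add: permutes_empty)
  then show ?case by (simp add: invc_def)
next
  case (Suc n)
  define m where "m = \<pi> n"
  have mle: "m \<le> n" using permutes_in_image[OF Suc.prems, of n] by (simp add: m_def)
  define \<rho> where "\<rho> = rot m n"
  have rho: "\<rho> permutes {0..<Suc n}" "sign \<rho> = (-1)^(n-m)"
    using rot_props[of m "n-m" n] mle by (auto simp: \<rho>_def)
  define \<pi>' where "\<pi>' = inv \<rho> \<circ> \<pi>"
  have p'S: "\<pi>' permutes {0..<Suc n}" unfolding \<pi>'_def
    by (rule permutes_compose[OF Suc.prems permutes_inv[OF rho(1)]])
  have rhom: "\<rho> n = m" using mle by (simp add: \<rho>_def rot_def)
  have "\<pi>' n = n"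
  proof -
    have "inv \<rho> m = n" using permutes_inv_eq[OF rho(1)] rhom by blast
    then show ?thesis by (simp add: m_def \<pi>'_def)
  qed
  then have p'n: "\<pi>' permutes {0..<n}" using permutes_restrict_Suc p'S by blast
  have pi_eq: "\<pi> = \<rho> \<circ> \<pi>'" unfolding \<pi>'_def using rho(1)
    by (auto simp: fun_eq_iff permutes_inverses)
  have sgn: "sign \<pi> = sign \<rho> * sign \<pi>'"
    unfolding pi_eq by (rule sign_compose; rule permutes_imp_permutation[OF _ rho(1)] permutes_imp_permutation[OF _ p'n] ; simp)
  have rho_mono: "a < n \<Longrightarrow> b < n \<Longrightarrow> \<rho> a < \<rho> b \<longleftrightarrow> a < b" for a b
    by (auto simp: \<rho>_def rot_def)
  have p'lt: "a < n \<Longrightarrow> \<pi>' a < n" for a using permutes_in_image[OF p'n] by auto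
  define S1 where "S1 = {(a,b). a\<in>{0..<n} \<and> b\<in>{0..<n} \<and> a<b \<and> \<pi>' b < \<pi>' a}"
  define S2 where "S2 = (\<lambda>a. (a,n)) ` {a. a<n \<and> m < \<pi> a}"
  have split: "{(a,b). a\<in>{0..<Suc n} \<and> b\<in>{0..<Suc n} \<and> a<b \<and> \<pi> b < \<pi> a} = S1 \<union> S2"
  proof -
    have eqv: "\<pi> b < \<pi> a \<longleftrightarrow> \<pi>' b < \<pi>' a" if "a<n" "b<n" for a b
      using rho_mono[OF p'lt[OF that(2)] p'lt[OF that(1)]] pi_eq by simp
    show ?thesis
    proof (rule set_eqI)
      fix x :: "nat \<times> nat"
      obtain a b where x: "x = (a,b)" by (rule prod.exhaust)
      show "x \<in> {(a,b). a\<in>{0..<Suc n} \<and> b\<in>{0..<Suc n} \<and> a<b \<and> \<pi> b < \<pi> a} \<longleftrightarrow> x \<in> S1 \<union> S2"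
      proof (cases "b = n")
        case True
        have "x \<notin> S1" unfolding x S1_def using True by simp
        moreover have "x \<in> S2 \<longleftrightarrow> a < n \<and> m < \<pi> a" unfolding x S2_def using True by blast
        moreover have "x \<in> {(a,b). a\<in>{0..<Suc n} \<and> b\<in>{0..<Suc n} \<and> a<b \<and> \<pi> b < \<pi> a} \<longleftrightarrow> a < n \<and> m < \<pi> a"
          unfolding x m_def using True by auto
        ultimately show ?thesis by blast
      next
        case False
        have "x \<notin> S2" unfolding x S2_def using False by auto
        moreover have "x \<in> S1 \<longleftrightarrow> a < n \<and> b < n \<and> a < b \<and> \<pi>' b < \<pi>' a" unfolding x S1_def by simp
        moreover have "x \<in> {(a,b). a\<in>{0..<Suc n} \<and> b\<in>{0..<Suc n} \<and> a<b \<and> \<pi> b < \<pi> a} \<longleftrightarrow> a < n \<and> b < n \<and> a < b \<and> \<pi> b < \<pi> a"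
          unfolding x using False by auto
        ultimately show ?thesis using eqv[of a b] by blast
      qed
    qed
  qed
  have disj: "S1 \<inter> S2 = {}" by (auto simp: S1_def S2_def)
  have cS2: "card S2 = n - m"
  proof -
    have "card S2 = card {a. a<n \<and> m < \<pi> a}" unfolding S2_def by (rule card_image) (simp add: inj_on_def)
    also have "\<dots> = card (\<pi> ` {a. a<n \<and> m < \<pi> a})"
      by (rule card_image[symmetric], rule permutes_inj_on[OF Suc.prems])
    also have "\<pi> ` {a. a<n \<and> m < \<pi> a} = {m<..n}"
    proof (rule set_eqI, rule iffI)
      fix v assume "v \<in> \<pi> ` {a. a<n \<and> m < \<pi> a}"
      then obtain a where a: "a < n" "m < \<pi> a" "v = \<pi> a" by blast
      have "\<pi> a \<in> {0..<Suc n}" using permutes_in_image[OF Suc.prems, of a] a(1) by simp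
      then show "v \<in> {m<..n}" using a by simp
    next
      fix v assume v: "v \<in> {m<..n}"
      define a where "a = inv \<pi> v"
      have va: "\<pi> a = v" unfolding a_def by (rule permutes_inverses(1)[OF Suc.prems])
      have "a \<in> {0..<Suc n}" unfolding a_def using permutes_in_image[OF permutes_inv[OF Suc.prems], of v] v by simp
      moreover have "a \<noteq> n" using va v m_def by auto
      ultimately have "a < n" by simp
      then show "v \<in> \<pi> ` {a. a<n \<and> m < \<pi> a}" using va v by force
    qed
    finally show ?thesis by simp
  qed
  have "invc {0..<Suc n} \<pi> = card S1 + card S2" unfolding invc_def split
  proof (rule card_Un_disjoint)
    have "S1 \<subseteq> {0..<n} \<times> {0..<n}" unfolding S1_def by auto
    then show "finite S1" by (rule finite_subset) simp
    show "finite S2" unfolding S2_def by simp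
    show "S1 \<inter> S2 = {}" by (rule disj)
  qed
  also have "card S1 = invc {0..<n} \<pi>'" by (simp add: S1_def invc_def)
  finally have "invc {0..<Suc n} \<pi> = invc {0..<n} \<pi>' + (n - m)" using cS2 by simp
  then show ?case using sgn rho Suc.IH[OF p'n] by (simp add: power_add)
qed

definition enum :: "'a::linorder set \<Rightarrow> nat \<Rightarrow> 'a" where
  "enum A t = sorted_list_of_set A ! t"

lemma enum_bij: "finite A \<Longrightarrow> bij_betw (enum A) {0..<card A} A"
proof -
  assume fA: "finite A"
  let ?xs = "sorted_list_of_set A"
  have d: "distinct ?xs" and s: "set ?xs = A" and l: "length ?xs = card A"
    using fA by (auto simp: sorted_list_of_set.distinct_sorted_key_list_of_set)
  have "bij_betw ((!) ?xs) {..<length ?xs} A"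
    by (rule bij_betw_nth[OF d]) (simp_all add: s)
  then show ?thesis using l unfolding enum_def atLeast0LessThan by simp
qed

lemma enum_mono: "finite A \<Longrightarrow> i < j \<Longrightarrow> j < card A \<Longrightarrow> enum A i < enum A j"
  unfolding enum_def
  by (rule sorted_wrt_nth_less[where P="(<)"]) (auto simp: sorted_list_of_set.strict_sorted_key_list_of_set)

lemma enum_less_iff: "finite A \<Longrightarrow> i < card A \<Longrightarrow> j < card A \<Longrightarrow> enum A i < enum A j \<longleftrightarrow> i < j"
  by (metis enum_mono linorder_neq_iff order_less_asym)

lemma enum_in: "finite A \<Longrightarrow> i < card A \<Longrightarrow> enum A i \<in> A"
  using bij_betwE[OF enum_bij[of A]] by simp

lemma invc_transfer:
  fixes r :: "'a::linorder \<Rightarrow> 'b::linorder" and \<phi> :: "'a \<Rightarrow> 'c::linorder" and f :: "'b \<Rightarrow> 'd::linorder"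
  assumes r: "bij_betw r X A" and mono: "\<And>x y. x\<in>X \<Longrightarrow> y\<in>X \<Longrightarrow> r x < r y \<longleftrightarrow> x < y"
    and ph: "\<And>x y. x\<in>X \<Longrightarrow> y\<in>X \<Longrightarrow> \<phi> y < \<phi> x \<longleftrightarrow> f (r y) < f (r x)"
  shows "invc X \<phi> = invc A f"
proof -
  let ?SX = "{(a,b). a\<in>X \<and> b\<in>X \<and> a<b \<and> \<phi> b < \<phi> a}"
  let ?SA = "{(a,b). a\<in>A \<and> b\<in>A \<and> a<b \<and> f b < f a}"
  let ?h = "\<lambda>(x,y). (r x, r y)"
  have inj: "inj_on ?h ?SX"
  proof (rule inj_onI)
    fix x y assume "x \<in> ?SX" "y \<in> ?SX" "?h x = ?h y"
    then show "x = y" using r unfolding bij_betw_def inj_on_def by (cases x, cases y) simp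
  qed
  have img: "?h ` ?SX = ?SA"
  proof (rule set_eqI, rule iffI)
    fix z assume "z \<in> ?h ` ?SX"
    then obtain q where q: "q \<in> ?SX" "z = ?h q" by (rule imageE)
    obtain a b where qab: "q = (a,b)" by (rule prod.exhaust)
    have ab: "(a,b) \<in> ?SX" "z = (r a, r b)" using q qab by simp_all
    then have ab': "a \<in> X" "b \<in> X" "a < b" "\<phi> b < \<phi> a" by auto
    have "r a \<in> A" "r b \<in> A" using bij_betwE[OF r] ab'(1,2) by blast+
    moreover have "r a < r b" using mono[OF ab'(1,2)] ab'(3) by simp
    moreover have "f (r b) < f (r a)" using ph[OF ab'(1,2)] ab'(4) by simp
    ultimately show "z \<in> ?SA" using ab(2) by simp
  next
    fix z assume "z \<in> ?SA"
    obtain u v where zuv: "z = (u,v)" by (rule prod.exhaust)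
    then have uv: "z = (u,v)" "u \<in> A" "v \<in> A" "u < v" "f v < f u" using \<open>z \<in> ?SA\<close> by simp_all
    obtain a where a: "a \<in> X" "r a = u" using uv(2) r unfolding bij_betw_def by blast
    obtain b where b: "b \<in> X" "r b = v" using uv(3) r unfolding bij_betw_def by blast
    have "a < b" using mono[OF a(1) b(1)] a b uv by simp
    moreover have "\<phi> b < \<phi> a" using ph[OF a(1) b(1)] a b uv by simp
    ultimately have "(a,b) \<in> ?SX" using a b by simp
    then show "z \<in> ?h ` ?SX" by (rule rev_image_eqI) (simp add: uv(1) a b)
  qed
  have "invc A f = card (?h ` ?SX)" unfolding invc_def img ..
  also have "\<dots> = card ?SX" by (rule card_image[OF inj])
  finally show ?thesis unfolding invc_def by simp
qed

lemma sign_invc: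
  fixes p :: "'a::linorder \<Rightarrow> 'a"
  assumes fA: "finite A" and p: "p permutes A"
  shows "sign p = (-1::int)^(invc A p)"
proof -
  define e where "e = enum A"
  define n where "n = card A"
  have e: "bij_betw e {0..<n} A" unfolding e_def n_def by (rule enum_bij[OF fA])
  define f where "f = inv_into {0..<n} e"
  have f: "bij_betw f A {0..<n}" unfolding f_def by (rule bij_betw_inv_into[OF e])
  have fe: "f (e t) = t" if "t < n" for t unfolding f_def using e that
    by (simp add: bij_betw_inv_into_left)
  have ef: "e (f a) = a" if "a \<in> A" for a unfolding f_def using e that
    by (simp add: bij_betw_inv_into_right)
  have emono: "t < n \<Longrightarrow> s < n \<Longrightarrow> e t < e s \<longleftrightarrow> t < s" for t s
    unfolding e_def n_def by (rule enum_less_iff[OF fA])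
  define \<pi> where "\<pi> = map_permutation A f p"
  have pi: "\<pi> permutes {0..<n}" unfolding \<pi>_def by (rule map_permutation_permutes[OF f p])
  have sg: "sign \<pi> = sign p" unfolding \<pi>_def
    by (rule sign_map_permutation[OF bij_betw_imp_inj_on[OF f] p fA])
  have fA_eq: "f ` A = {0..<n}" using f by (simp add: bij_betw_def)
  have pit: "\<pi> t = f (p (e t))" if "t < n" for t
  proof -
    have "e t \<in> A" using bij_betwE[OF e] that by simp
    have "inv_into A f t = e t"
      using bij_betw_inv_into_left[OF f \<open>e t \<in> A\<close>] fe[OF that] by simp
    then show ?thesis unfolding \<pi>_def map_permutation_def restrict_id_def fA_eq using that by simp
  qed
  have "invc {0..<n} \<pi> = invc A p"
  proof (rule invc_transfer[OF e])
    fix x y assume x: "x \<in> {0..<n}" and y: "y \<in> {0..<n}"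
    show "e x < e y \<longleftrightarrow> x < y" using emono x y by simp
    have "e x \<in> A" "e y \<in> A" using bij_betwE[OF e] x y by blast+
    then have px: "p (e x) \<in> A" and py: "p (e y) \<in> A"
      using permutes_in_image[OF p] by simp_all
    have fx: "f (p (e x)) < n" and fy: "f (p (e y)) < n" using bij_betwE[OF f] px py by auto
    have "\<pi> y < \<pi> x \<longleftrightarrow> f (p (e y)) < f (p (e x))" using pit x y by simp
    also have "\<dots> \<longleftrightarrow> e (f (p (e y))) < e (f (p (e x)))"
      using emono[OF fy fx] by simp
    also have "\<dots> \<longleftrightarrow> p (e y) < p (e x)" using ef px py by simp
    finally show "\<pi> y < \<pi> x \<longleftrightarrow> p (e y) < p (e x)" .
  qed
  then show ?thesis using sign_invc_nat[OF pi] sg by simp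
qed

definition bijs :: "'a set \<Rightarrow> 'a set \<Rightarrow> ('a \<Rightarrow> 'a) set" where
  "bijs I J = {f \<in> I \<rightarrow>\<^sub>E J. bij_betw f I J}"

definition dsub :: "((complex, 'n::{finite,linorder}) vec, 'n) vec \<Rightarrow> 'n set \<Rightarrow> 'n set \<Rightarrow> complex" where
  "dsub M I J = (\<Sum>f\<in>bijs I J. (-1)^(invc I f) * (\<Prod>i\<in>I. M$i$(f i)))"

lemma finite_bijs: "finite I \<Longrightarrow> finite J \<Longrightarrow> finite (bijs I J)"
  unfolding bijs_def by (rule finite_subset[of _ "I \<rightarrow>\<^sub>E J"]) (auto intro: finite_PiE)

lemma det_sub_dsub:
  fixes M :: "((complex, 'n::{finite,linorder}) vec, 'n) vec"
  assumes cIJ: "card I = card J"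
  shows "det_sub M I J = dsub M I J"
proof -
  define p where "p = card I"
  define eI where "eI = enum I"
  define eJ where "eJ = enum J"
  have bI: "bij_betw eI {0..<p} I" unfolding eI_def p_def by (rule enum_bij) simp
  have bJ: "bij_betw eJ {0..<p} J" unfolding eJ_def p_def cIJ by (rule enum_bij) simp
  define fI where "fI = inv_into {0..<p} eI"
  define fJ where "fJ = inv_into {0..<p} eJ"
  have bfI: "bij_betw fI I {0..<p}" unfolding fI_def by (rule bij_betw_inv_into[OF bI])
  have bfJ: "bij_betw fJ J {0..<p}" unfolding fJ_def by (rule bij_betw_inv_into[OF bJ])
  have fIe: "fI (eI t) = t" if "t < p" for t unfolding fI_def using bI that by (simp add: bij_betw_inv_into_left)
  have fJe: "fJ (eJ t) = t" if "t < p" for t unfolding fJ_def using bJ that by (simp add: bij_betw_inv_into_left)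
  have eIf: "eI (fI a) = a" if "a \<in> I" for a unfolding fI_def using bI that by (simp add: bij_betw_inv_into_right)
  have eJf: "eJ (fJ a) = a" if "a \<in> J" for a unfolding fJ_def using bJ that by (simp add: bij_betw_inv_into_right)
  have eIin: "eI t \<in> I" if "t < p" for t using bij_betwE[OF bI] that by simp
  have eJin: "eJ t \<in> J" if "t < p" for t using bij_betwE[OF bJ] that by simp
  have fIin: "fI a < p" if "a \<in> I" for a using bij_betwE[OF bfI] that by simp
  have fJin: "fJ a < p" if "a \<in> J" for a using bij_betwE[OF bfJ] that by simp
  have eJmono: "t < p \<Longrightarrow> s < p \<Longrightarrow> eJ t < eJ s \<longleftrightarrow> t < s" for t s
    unfolding eJ_def p_def cIJ by (rule enum_less_iff) simp_all
  have eImono: "t < p \<Longrightarrow> s < p \<Longrightarrow> eI t < eI s \<longleftrightarrow> t < s" for t s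
    unfolding eI_def p_def by (rule enum_less_iff) simp_all
  have ds: "det_sub M I J = (\<Sum>\<pi>\<in>{\<pi>. \<pi> permutes {0..<p}}. of_int (sign \<pi>) * (\<Prod>t\<in>{0..<p}. M $ (eI t) $ (eJ (\<pi> t))))"
    unfolding det_sub_def Let_def eI_def eJ_def enum_def p_def atLeast0LessThan by simp
  define jj where "jj = (\<lambda>\<pi>. restrict (\<lambda>i. eJ (\<pi> (fI i))) I)"
  define ii where "ii = (\<lambda>f. (\<lambda>t. if t < p then fJ (f (eI t)) else t))"
  have "(\<Sum>\<pi>\<in>{\<pi>. \<pi> permutes {0..<p}}. of_int (sign \<pi>) * (\<Prod>t\<in>{0..<p}. M $ (eI t) $ (eJ (\<pi> t))))
      = (\<Sum>f\<in>bijs I J. (-1)^(invc I f) * (\<Prod>i\<in>I. M$i$(f i)))"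
  proof (rule sum.reindex_bij_witness[where j = jj and i = ii])
    fix \<pi> assume "\<pi> \<in> {\<pi>. \<pi> permutes {0..<p}}"
    then have pi: "\<pi> permutes {0..<p}" by simp
    have pil: "\<pi> t < p" if "t < p" for t using permutes_in_image[OF pi, of t] that by simp
    show "ii (jj \<pi>) = \<pi>"
    proof
      fix t show "ii (jj \<pi>) t = \<pi> t"
      proof (cases "t < p")
        case True
        then show ?thesis unfolding ii_def jj_def using eIin[OF True] fIe[OF True] fJe[OF pil[OF True]] by simp
      next
        case False
        then show ?thesis unfolding ii_def using permutes_not_in[OF pi, of t] by simp
      qed
    qed
    have bjj: "bij_betw (\<lambda>i. eJ (\<pi> (fI i))) I J"
    proof -
      have "bij_betw \<pi> {0..<p} {0..<p}" by (rule permutes_imp_bij[OF pi])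
      then have "bij_betw (\<pi> \<circ> fI) I {0..<p}" by (rule bij_betw_trans[OF bfI])
      then have "bij_betw (eJ \<circ> (\<pi> \<circ> fI)) I J" by (rule bij_betw_trans[OF _ bJ])
      then show ?thesis by (simp add: o_def)
    qed
    have "bij_betw (jj \<pi>) I J" unfolding jj_def by (rule bij_betw_cong[THEN iffD1, OF _ bjj]) simp
    moreover have "jj \<pi> \<in> I \<rightarrow>\<^sub>E J" unfolding jj_def using bij_betwE[OF bjj] by simp
    ultimately show "jj \<pi> \<in> bijs I J" unfolding bijs_def by simp
    have jje: "jj \<pi> (eI t) = eJ (\<pi> t)" if "t < p" for t unfolding jj_def using eIin[OF that] fIe[OF that] by simp
    have "(\<Prod>i\<in>I. M$i$(jj \<pi> i)) = (\<Prod>t\<in>{0..<p}. M$(eI t)$(jj \<pi> (eI t)))"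
      by (rule prod.reindex_bij_betw[OF bI, symmetric])
    also have "\<dots> = (\<Prod>t\<in>{0..<p}. M $ (eI t) $ (eJ (\<pi> t)))" by (rule prod.cong) (simp_all add: jje)
    finally have pr: "(\<Prod>i\<in>I. M$i$(jj \<pi> i)) = (\<Prod>t\<in>{0..<p}. M $ (eI t) $ (eJ (\<pi> t)))" .
    have "invc {0..<p} \<pi> = invc I (jj \<pi>)"
    proof (rule invc_transfer[OF bI])
      fix x y assume x: "x \<in> {0..<p}" and y: "y \<in> {0..<p}"
      show "eI x < eI y \<longleftrightarrow> x < y" using eImono x y by simp
      show "\<pi> y < \<pi> x \<longleftrightarrow> jj \<pi> (eI y) < jj \<pi> (eI x)"
        using jje x y eJmono pil by simp
    qed
    then have "sign \<pi> = (-1)^(invc I (jj \<pi>))" using sign_invc_nat[OF pi] by simp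
    then show "(-1)^(invc I (jj \<pi>)) * (\<Prod>i\<in>I. M$i$(jj \<pi> i)) = of_int (sign \<pi>) * (\<Prod>t\<in>{0..<p}. M $ (eI t) $ (eJ (\<pi> t)))"
      using pr by simp
  next
    fix f assume "f \<in> bijs I J"
    then have fE: "f \<in> I \<rightarrow>\<^sub>E J" and fb: "bij_betw f I J" unfolding bijs_def by auto
    show "jj (ii f) = f"
    proof
      fix x show "jj (ii f) x = f x"
      proof (cases "x \<in> I")
        case True
        have "f x \<in> J" using fE True by auto
        then show ?thesis unfolding jj_def ii_def using True fIin[OF True] eIf[OF True] eJf by simp
      next
        case False
        then show ?thesis unfolding jj_def using PiE_arb[OF fE False] by simp
      qed
    qed
    have bii: "bij_betw (fJ \<circ> (f \<circ> eI)) {0..<p} {0..<p}"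
      by (rule bij_betw_trans[OF bij_betw_trans[OF bI fb] bfJ])
    have "bij_betw (ii f) {0..<p} {0..<p}"
      by (rule bij_betw_cong[THEN iffD1, OF _ bii]) (simp add: ii_def)
    moreover have "ii f t = t" if "t \<notin> {0..<p}" for t using that by (simp add: ii_def)
    ultimately have "ii f permutes {0..<p}" by (rule bij_imp_permutes)
    then show "ii f \<in> {\<pi>. \<pi> permutes {0..<p}}" by simp
  qed
  then show ?thesis unfolding ds dsub_def .
qed

lemma det_sub_single: "det_sub M {a} {b} = M$a$b"
proof -
  have "{0..<Suc 0} = {0::nat}" by auto
  then show ?thesis unfolding det_sub_def Let_def by simp
qed

lemma dsub_det: "dsub M UNIV UNIV = det M"
proof -
  have b: "bijs (UNIV::'a set) UNIV = {p. p permutes (UNIV :: 'a set)}"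
  proof (rule set_eqI)
    fix p :: "'a \<Rightarrow> 'a"
    have "p \<in> bijs UNIV UNIV \<longleftrightarrow> bij_betw p UNIV UNIV" unfolding bijs_def by simp
    also have "\<dots> \<longleftrightarrow> p permutes UNIV"
      using permutes_imp_bij[of p UNIV] bij_imp_permutes[of p UNIV] by blast
    finally show "p \<in> bijs UNIV UNIV \<longleftrightarrow> p \<in> {p. p permutes UNIV}" by simp
  qed
  show ?thesis unfolding dsub_def det_def b
  proof (rule sum.cong[OF refl])
    fix p :: "'a \<Rightarrow> 'a" assume "p \<in> {p. p permutes UNIV}"
    then have "sign p = (-1)^(invc UNIV p)" by (intro sign_invc) simp_all
    then show "(-1)^(invc UNIV p) * (\<Prod>i\<in>UNIV. M$i$(p i)) = of_int (sign p) * (\<Prod>i\<in>UNIV. M$i$(p i))"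
      by simp
  qed
qed

lemma invc_inverse:
  assumes fb: "bij_betw f I J" and gf: "\<And>i. i \<in> I \<Longrightarrow> g (f i) = i"
    and gJ: "\<And>j. j \<in> J \<Longrightarrow> g j \<in> I" and fg: "\<And>j. j \<in> J \<Longrightarrow> f (g j) = j"
  shows "invc J g = invc I f"
proof -
  let ?SJ = "{(a,b). a\<in>J \<and> b\<in>J \<and> a<b \<and> g b < g a}"
  let ?SI = "{(a,b). a\<in>I \<and> b\<in>I \<and> a<b \<and> f b < f a}"
  have fI: "f i \<in> J" if "i \<in> I" for i using bij_betwE[OF fb] that by simp
  have "bij_betw (\<lambda>(a,b). (g b, g a)) ?SJ ?SI"
  proof (rule bij_betw_byWitness[where f' = "\<lambda>(x,y). (f y, f x)"])
    show "\<forall>a\<in>?SJ. (\<lambda>(x,y). (f y, f x)) ((\<lambda>(a,b). (g b, g a)) a) = a"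
      using fg by auto
    show "\<forall>a\<in>?SI. (\<lambda>(a,b). (g b, g a)) ((\<lambda>(x,y). (f y, f x)) a) = a"
      using gf by auto
    show "(\<lambda>(a,b). (g b, g a)) ` ?SJ \<subseteq> ?SI"
    proof
      fix z assume "z \<in> (\<lambda>(a,b). (g b, g a)) ` ?SJ"
      then obtain q where q: "q \<in> ?SJ" "z = (\<lambda>(a,b). (g b, g a)) q" by (rule imageE)
      obtain a b where qab: "q = (a,b)" by (rule prod.exhaust)
      have h: "a \<in> J" "b \<in> J" "a < b" "g b < g a" using q qab by simp_all
      then show "z \<in> ?SI" using q(2) qab gJ fg by simp
    qed
    show "(\<lambda>(x,y). (f y, f x)) ` ?SI \<subseteq> ?SJ"
    proof
      fix z assume "z \<in> (\<lambda>(x,y). (f y, f x)) ` ?SI"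
      then obtain q where q: "q \<in> ?SI" "z = (\<lambda>(x,y). (f y, f x)) q" by (rule imageE)
      obtain a b where qab: "q = (a,b)" by (rule prod.exhaust)
      have h: "a \<in> I" "b \<in> I" "a < b" "f b < f a" using q qab by simp_all
      then show "z \<in> ?SJ" using q(2) qab gf fI by simp
    qed
  qed
  then show ?thesis unfolding invc_def by (rule bij_betw_same_card)
qed

lemma dsub_transpose: "dsub (transpose M) I J = dsub M J I"
proof -
  define j where "j = (\<lambda>f. restrict (inv_into I f) J)"
  define i where "i = (\<lambda>g. restrict (inv_into J g) I)"
  show ?thesis unfolding dsub_def
  proof (rule sum.reindex_bij_witness[where j = j and i = i])
    fix f assume "f \<in> bijs I J"
    then have fE: "f \<in> I \<rightarrow>\<^sub>E J" and fb: "bij_betw f I J" unfolding bijs_def by auto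
    have fI: "f x \<in> J" if "x \<in> I" for x using bij_betwE[OF fb] that by simp
    have gb: "bij_betw (inv_into I f) J I" by (rule bij_betw_inv_into[OF fb])
    have gf: "inv_into I f (f x) = x" if "x \<in> I" for x using bij_betw_inv_into_left[OF fb that] .
    have fg: "f (inv_into I f y) = y" if "y \<in> J" for y using bij_betw_inv_into_right[OF fb that] .
    have gJ: "inv_into I f y \<in> I" if "y \<in> J" for y using bij_betwE[OF gb] that by simp
    have jb: "bij_betw (j f) J I" unfolding j_def by (rule bij_betw_cong[THEN iffD1, OF _ gb]) simp
    show "j f \<in> bijs J I" unfolding bijs_def using jb gJ by (simp add: j_def)
    show "i (j f) = f"
    proof
      fix x show "i (j f) x = f x"
      proof (cases "x \<in> I")
        case True
        have "inv_into J (j f) (j f (f x)) = f x"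
          by (rule inv_into_f_f[OF bij_betw_imp_inj_on[OF jb] fI[OF True]])
        moreover have "j f (f x) = x" unfolding j_def using fI[OF True] gf[OF True] by simp
        ultimately show ?thesis unfolding i_def using True by simp
      next
        case False
        then show ?thesis unfolding i_def using PiE_arb[OF fE False] by simp
      qed
    qed
    have "invc J (j f) = invc I f"
    proof (rule invc_inverse[OF fb])
      fix x assume "x \<in> I" then show "j f (f x) = x" unfolding j_def using fI gf by simp
    next
      fix y assume "y \<in> J" then show "j f y \<in> I" "f (j f y) = y" unfolding j_def using gJ fg by simp_all
    qed
    moreover have "(\<Prod>a\<in>J. M$a$(j f a)) = (\<Prod>x\<in>I. (transpose M)$x$(f x))"
    proof -
      have "(\<Prod>x\<in>I. (transpose M)$x$(f x)) = (\<Prod>x\<in>I. (\<lambda>a. M$a$(j f a)) (f x))"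
        by (rule prod.cong[OF refl]) (simp add: transpose_def j_def fI gf)
      also have "\<dots> = (\<Prod>a\<in>J. M$a$(j f a))" by (rule prod.reindex_bij_betw[OF fb])
      finally show ?thesis by simp
    qed
    ultimately show "(-1)^(invc J (j f)) * (\<Prod>a\<in>J. M$a$(j f a)) = (-1)^(invc I f) * (\<Prod>x\<in>I. (transpose M)$x$(f x))"
      by simp
  next
    fix g assume "g \<in> bijs J I"
    then have gE: "g \<in> J \<rightarrow>\<^sub>E I" and gb: "bij_betw g J I" unfolding bijs_def by auto
    have gJ: "g x \<in> I" if "x \<in> J" for x using bij_betwE[OF gb] that by simp
    have hb: "bij_betw (inv_into J g) I J" by (rule bij_betw_inv_into[OF gb])
    have hg: "inv_into J g (g x) = x" if "x \<in> J" for x using bij_betw_inv_into_left[OF gb that] .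
    have hI: "inv_into J g y \<in> J" if "y \<in> I" for y using bij_betwE[OF hb] that by simp
    have ib: "bij_betw (i g) I J" unfolding i_def by (rule bij_betw_cong[THEN iffD1, OF _ hb]) simp
    show "i g \<in> bijs I J" unfolding bijs_def using ib hI by (simp add: i_def)
    show "j (i g) = g"
    proof
      fix x show "j (i g) x = g x"
      proof (cases "x \<in> J")
        case True
        have "inv_into I (i g) (i g (g x)) = g x"
          by (rule inv_into_f_f[OF bij_betw_imp_inj_on[OF ib] gJ[OF True]])
        moreover have "i g (g x) = x" unfolding i_def using gJ[OF True] hg[OF True] by simp
        ultimately show ?thesis unfolding j_def using True by simp
      next
        case False
        then show ?thesis unfolding j_def using PiE_arb[OF gE False] by simp
      qed
    qed
  qed
qed

lemma card_filter_sum: "finite A \<Longrightarrow> card {x\<in>A. P x} = (\<Sum>x\<in>A. if P x then 1 else 0)"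
proof -
  assume fA: "finite A"
  have "(\<Sum>x\<in>A. if P x then 1 else 0) = (\<Sum>x\<in>{x\<in>A. P x}. (1::nat))"
    by (rule sum.inter_filter[OF fA, symmetric])
  then show ?thesis by simp
qed

lemma invc_sum:
  fixes A :: "'a::{finite,linorder} set" and g :: "'a \<Rightarrow> 'b::linorder"
  shows "invc A g = (\<Sum>a\<in>A. \<Sum>b\<in>A. if a < b \<and> g b < g a then 1 else 0)"
proof -
  have "{(a,b). a\<in>A \<and> b\<in>A \<and> a<b \<and> g b < g a} = {x\<in>A\<times>A. fst x < snd x \<and> g (snd x) < g (fst x)}" by auto
  then have "invc A g = (\<Sum>x\<in>A\<times>A. if fst x < snd x \<and> g (snd x) < g (fst x) then 1 else 0)"
    unfolding invc_def by (simp add: card_filter_sum)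
  also have "\<dots> = (\<Sum>(a,b)\<in>A\<times>A. if a < b \<and> g b < g a then 1 else 0)"
    by (rule sum.cong) (auto split: prod.splits)
  also have "\<dots> = (\<Sum>a\<in>A. \<Sum>b\<in>A. if a < b \<and> g b < g a then 1 else 0)"
    by (rule sum.cartesian_product[symmetric])
  finally show ?thesis .
qed

lemma invc_cong: "(\<And>x. x \<in> A \<Longrightarrow> f x = g x) \<Longrightarrow> invc A f = invc A g"
  unfolding invc_def by (rule arg_cong[where f=card]) auto

lemma spos_split:
  fixes H I :: "'a::{finite,linorder} set"
  assumes "I \<subseteq> H"
  shows "s_pos H I + (\<Sum>a\<in>I. \<Sum>b\<in>H-I. if a < b then 1 else 0) = s_pos I I + card I * card (H - I)"
proof -
  have pos: "pos H a = pos I a + card {b\<in>H-I. b < a}" if a: "a \<in> I" for a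
  proof -
    have "{j\<in>H. j \<le> a} = {j\<in>I. j \<le> a} \<union> {b\<in>H-I. b < a}" using a assms by (auto simp: order.order_iff_strict)
    moreover have "{j\<in>I. j \<le> a} \<inter> {b\<in>H-I. b < a} = {}" by auto
    ultimately show ?thesis unfolding pos_def by (simp add: card_Un_disjoint)
  qed
  have two: "card {b\<in>H-I. b < a} + (\<Sum>b\<in>H-I. if a < b then 1 else 0) = card (H-I)" if a: "a \<in> I" for a
  proof -
    have "card {b\<in>H-I. b < a} = (\<Sum>b\<in>H-I. if b < a then 1 else 0)" by (rule card_filter_sum) simp
    moreover have "(\<Sum>b\<in>H-I. (if b < a then 1 else 0) + (if a < b then 1 else 0)) = (\<Sum>b\<in>H-I. 1::nat)"
    proof (rule sum.cong[OF refl])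
      fix b assume "b \<in> H - I"
      then have "b \<noteq> a" using a by auto
      then show "(if b < a then 1 else 0) + (if a < b then 1 else 0) = (1::nat)" by auto
    qed
    ultimately show ?thesis by (simp add: sum.distrib)
  qed
  have "s_pos H I = (\<Sum>a\<in>I. pos I a + card {b\<in>H-I. b < a})" unfolding s_pos_def by (rule sum.cong) (simp_all add: pos)
  also have "\<dots> = s_pos I I + (\<Sum>a\<in>I. card {b\<in>H-I. b < a})" by (simp add: sum.distrib s_pos_def)
  finally have "s_pos H I + (\<Sum>a\<in>I. \<Sum>b\<in>H-I. if a < b then 1 else 0)
      = s_pos I I + (\<Sum>a\<in>I. card {b\<in>H-I. b < a} + (\<Sum>b\<in>H-I. if a < b then 1 else 0))"
    by (simp add: sum.distrib)
  also have "\<dots> = s_pos I I + (\<Sum>a\<in>I. card (H-I))" using two by simp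
  finally show ?thesis by simp
qed

lemma pos_enum:
  fixes A :: "'a::{finite,linorder} set"
  assumes t: "t < card A"
  shows "pos A (enum A t) = Suc t"
proof -
  have fA: "finite A" by simp
  have "{j\<in>A. j \<le> enum A t} = enum A ` {0..t}"
  proof (rule set_eqI, rule iffI)
    fix j assume j: "j \<in> {j\<in>A. j \<le> enum A t}"
    then obtain s where s: "s \<in> {0..<card A}" "j = enum A s"
      using enum_bij[OF fA] unfolding bij_betw_def by blast
    have "s \<le> t" using j s enum_mono[OF fA, of t s] t by (cases "t < s") auto
    then show "j \<in> enum A ` {0..t}" using s by auto
  next
    fix j assume "j \<in> enum A ` {0..t}"
    then obtain s where s: "s \<le> t" "j = enum A s" by auto
    have "j \<in> A" using s t enum_in[OF fA] by simp
    moreover have "j \<le> enum A t" using s enum_mono[OF fA, of s t] t by (cases "s = t") auto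
    ultimately show "j \<in> {j\<in>A. j \<le> enum A t}" by simp
  qed
  moreover have "inj_on (enum A) {0..t}"
    by (rule inj_on_subset[OF bij_betw_imp_inj_on[OF enum_bij[OF fA]]]) (use t in auto)
  ultimately show ?thesis unfolding pos_def by (simp add: card_image)
qed

lemma spos_self: "s_pos (A::'a::{finite,linorder} set) A = (\<Sum>t<card A. Suc t)"
proof -
  have "s_pos A A = (\<Sum>t\<in>{0..<card A}. pos A (enum A t))"
    unfolding s_pos_def by (rule sum.reindex_bij_betw[OF enum_bij, symmetric]) simp
  also have "\<dots> = (\<Sum>t<card A. Suc t)" by (simp add: pos_enum atLeast0LessThan)
  finally show ?thesis .
qed

lemma invc_split:
  fixes H I :: "'a::{finite,linorder} set" and g :: "'a \<Rightarrow> 'b::linorder"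
  assumes "I \<subseteq> H"
  shows "invc H g = invc I g + invc (H-I) g + (\<Sum>a\<in>I. \<Sum>b\<in>H-I. if a < b \<and> g b < g a then 1 else 0)
          + (\<Sum>a\<in>I. \<Sum>b\<in>H-I. if b < a \<and> g a < g b then 1 else 0)"
proof -
  define D where "D = H - I"
  have HID: "H = I \<union> D" and dis: "I \<inter> D = {}" using assms by (auto simp: D_def)
  define F where "F = (\<lambda>a b. if a < b \<and> g b < g a then 1 else (0::nat))"
  have inner: "(\<Sum>b\<in>H. F a b) = (\<Sum>b\<in>I. F a b) + (\<Sum>b\<in>D. F a b)" for a
    unfolding HID by (rule sum.union_disjoint) (simp_all add: dis)
  have "invc H g = (\<Sum>a\<in>H. \<Sum>b\<in>H. F a b)" unfolding invc_sum F_def ..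
  also have "\<dots> = (\<Sum>a\<in>I. \<Sum>b\<in>H. F a b) + (\<Sum>a\<in>D. \<Sum>b\<in>H. F a b)"
    unfolding HID by (rule sum.union_disjoint) (simp_all add: dis)
  also have "\<dots> = ((\<Sum>a\<in>I. \<Sum>b\<in>I. F a b) + (\<Sum>a\<in>I. \<Sum>b\<in>D. F a b)) + ((\<Sum>a\<in>D. \<Sum>b\<in>I. F a b) + (\<Sum>a\<in>D. \<Sum>b\<in>D. F a b))"
    by (simp add: inner sum.distrib)
  also have "(\<Sum>a\<in>D. \<Sum>b\<in>I. F a b) = (\<Sum>b\<in>I. \<Sum>a\<in>D. F a b)" by (rule sum.swap)
  finally show ?thesis unfolding invc_sum F_def D_def by simp
qed

definition YY :: "'a::linorder set \<Rightarrow> 'a set \<Rightarrow> nat" where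
  "YY P Q = (\<Sum>x\<in>P. \<Sum>y\<in>Q. if x < y then 1 else 0)"

definition ZZ :: "'a::linorder set \<Rightarrow> ('a \<Rightarrow> 'b) \<Rightarrow> 'a set \<Rightarrow> nat" where
  "ZZ I g D = (\<Sum>a\<in>I. \<Sum>b\<in>D. if a < b \<and> g a = g b then 1 else 0)"

lemma neg1_pow_add2: "(-1::complex)^(e + 2*k) = (-1)^e"
  by (simp add: power_add power_mult)

lemma parity:
  fixes H I P Q :: "'a::{finite,linorder} set" and g :: "'a \<Rightarrow> 'a"
  assumes IH: "I \<subseteq> H" and bI: "bij_betw g I P" and bD: "bij_betw g (H-I) Q"
  shows "(-1::complex)^(s_pos H I + invc I g + invc (H-I) g)
       = (-1)^(s_pos P P + card P * card Q + invc H g + YY P Q + ZZ I g (H-I))"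
proof -
  define D where "D = H - I"
  have dis: "a \<noteq> b" if "a \<in> I" "b \<in> D" for a b using that by (auto simp: D_def)
  define X where "X = (\<Sum>a\<in>I. \<Sum>b\<in>D. if a < b then 1 else (0::nat))"
  define C1 where "C1 = (\<Sum>a\<in>I. \<Sum>b\<in>D. if a < b \<and> g b < g a then 1 else (0::nat))"
  define C2 where "C2 = (\<Sum>a\<in>I. \<Sum>b\<in>D. if b < a \<and> g a < g b then 1 else (0::nat))"
  define W where "W = (\<Sum>a\<in>I. \<Sum>b\<in>D. if a < b \<and> g a < g b then 1 else (0::nat))"
  define Z where "Z = ZZ I g D"
  define Y' where "Y' = (\<Sum>a\<in>I. \<Sum>b\<in>D. if g a < g b then 1 else (0::nat))"
  have cI: "card I = card P" using bij_betw_same_card[OF bI] .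
  have cD: "card D = card Q" using bij_betw_same_card[OF bD] unfolding D_def .
  have sp: "s_pos H I + X = s_pos P P + card P * card Q"
    using spos_split[OF IH] cI cD spos_self[of I] spos_self[of P] unfolding X_def D_def by simp
  have inv: "invc H g = invc I g + invc D g + C1 + C2"
    using invc_split[OF IH, of g] unfolding C1_def C2_def D_def by simp
  have eX: "X = C1 + W + Z"
  proof -
    have "X = (\<Sum>a\<in>I. \<Sum>b\<in>D. (if a < b \<and> g b < g a then 1 else 0) + (if a < b \<and> g a < g b then 1 else 0)
                 + (if a < b \<and> g a = g b then 1 else (0::nat)))"
      unfolding X_def
    proof (rule sum.cong[OF refl], rule sum.cong[OF refl])
      fix a b
      show "(if a < b then 1 else 0) = (if a < b \<and> g b < g a then 1 else 0) + (if a < b \<and> g a < g b then 1 else 0)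
                 + (if a < b \<and> g a = g b then 1 else (0::nat))"
        by (cases "g a < g b"; cases "g b < g a"; cases "a < b") auto
    qed
    then show ?thesis unfolding C1_def W_def Z_def ZZ_def by (simp add: sum.distrib)
  qed
  have eY: "Y' = W + C2"
  proof -
    have "Y' = (\<Sum>a\<in>I. \<Sum>b\<in>D. (if a < b \<and> g a < g b then 1 else 0) + (if b < a \<and> g a < g b then 1 else (0::nat)))"
      unfolding Y'_def
    proof (rule sum.cong[OF refl], rule sum.cong[OF refl])
      fix a b assume "a \<in> I" "b \<in> D"
      then have "a \<noteq> b" by (rule dis)
      then show "(if g a < g b then 1 else 0) = (if a < b \<and> g a < g b then 1 else 0) + (if b < a \<and> g a < g b then 1 else (0::nat))"
        by (cases "a < b"; cases "b < a") auto
    qed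
    then show ?thesis unfolding C2_def W_def by (simp add: sum.distrib)
  qed
  have eYY: "Y' = YY P Q"
  proof -
    have inner: "(\<Sum>b\<in>D. if x < g b then 1 else (0::nat)) = (\<Sum>y\<in>Q. if x < y then 1 else 0)" for x
      by (rule sum.reindex_bij_betw[OF bD[folded D_def]])
    have "Y' = (\<Sum>a\<in>I. (\<lambda>x. \<Sum>y\<in>Q. if x < y then 1 else (0::nat)) (g a))"
      unfolding Y'_def using inner by simp
    also have "\<dots> = YY P Q" unfolding YY_def by (rule sum.reindex_bij_betw[OF bI])
    finally show ?thesis .
  qed
  have key: "(s_pos H I + invc I g + invc D g) + 2 * (C1 + C2 + W + Z)
       = s_pos P P + card P * card Q + invc H g + YY P Q + Z"
    using sp inv eX eY eYY by presburger
  have "(-1::complex)^(s_pos H I + invc I g + invc D g)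
      = (-1)^((s_pos H I + invc I g + invc D g) + 2 * (C1 + C2 + W + Z))"
    by (rule neg1_pow_add2[symmetric])
  also have "\<dots> = (-1)^(s_pos P P + card P * card Q + invc H g + YY P Q + Z)" by (simp only: key)
  finally show ?thesis unfolding Z_def D_def .
qed

definition Sset :: "'a set \<Rightarrow> 'a set \<Rightarrow> 'a set \<Rightarrow> ('a set \<times> ('a \<Rightarrow> 'a)) set" where
  "Sset H P Q = {(I,g). I \<subseteq> H \<and> g \<in> H \<rightarrow>\<^sub>E (P \<union> Q) \<and> bij_betw g I P \<and> bij_betw g (H-I) Q}"

definition merge :: "'a set \<Rightarrow> ('a \<Rightarrow> 'a) \<Rightarrow> ('a \<Rightarrow> 'a) \<Rightarrow> 'a \<Rightarrow> 'a" where
  "merge I f1 f2 = (\<lambda>h. if h \<in> I then f1 h else f2 h)"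

lemma finite_Sset: "finite (Sset (H::'a::finite set) P Q)"
proof -
  have "Sset H P Q \<subseteq> Pow H \<times> (H \<rightarrow>\<^sub>E (P \<union> Q))" unfolding Sset_def by auto
  moreover have "finite (Pow H \<times> (H \<rightarrow>\<^sub>E (P \<union> Q)))" by (intro finite_cartesian_product finite_PiE) simp_all
  ultimately show ?thesis by (rule finite_subset)
qed

lemma lap_S:
  fixes M :: "((complex, 'n::{finite,linorder}) vec, 'n) vec"
  shows "(\<Sum>I\<in>{I. I \<subseteq> H \<and> card I = card P}. (-1)^(s_pos H I) * dsub M I P * dsub M (H - I) Q)
     = (\<Sum>(I,g)\<in>Sset H P Q. (-1)^(s_pos H I + invc I g + invc (H-I) g) * (\<Prod>h\<in>H. M$h$(g h)))"
proof -
  define Iset where "Iset = {I. I \<subseteq> H \<and> card I = card P}"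
  define F where "F = (\<lambda>(I, f1, f2). (-1::complex)^(s_pos H I) * ((-1)^(invc I f1) * (\<Prod>i\<in>I. M$i$(f1 i)))
        * ((-1)^(invc (H-I) f2) * (\<Prod>i\<in>H-I. M$i$(f2 i))))"
  have "(\<Sum>I\<in>Iset. (-1)^(s_pos H I) * dsub M I P * dsub M (H - I) Q)
     = (\<Sum>I\<in>Iset. \<Sum>f1\<in>bijs I P. \<Sum>f2\<in>bijs (H-I) Q. F (I, f1, f2))"
    unfolding dsub_def F_def by (simp add: sum_distrib_left sum_distrib_right mult.assoc) (rule sum.cong[OF refl], rule sum.swap)
  also have "\<dots> = (\<Sum>I\<in>Iset. \<Sum>x\<in>bijs I P \<times> bijs (H-I) Q. F (I, x))"
    by (rule sum.cong[OF refl], subst sum.cartesian_product) (simp add: case_prod_beta)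
  also have "\<dots> = (\<Sum>y\<in>Sigma Iset (\<lambda>I. bijs I P \<times> bijs (H-I) Q). F y)"
    by (subst sum.Sigma) (simp_all add: finite_bijs case_prod_beta)
  also have "\<dots> = (\<Sum>(I,g)\<in>Sset H P Q. (-1)^(s_pos H I + invc I g + invc (H-I) g) * (\<Prod>h\<in>H. M$h$(g h)))"
  proof (rule sum.reindex_bij_witness[where j = "\<lambda>(I,f1,f2). (I, merge I f1 f2)"
        and i = "\<lambda>(I,g). (I, restrict g I, restrict g (H-I))"])
    fix y assume y: "y \<in> Sigma Iset (\<lambda>I. bijs I P \<times> bijs (H-I) Q)"
    obtain I f1 f2 where yy: "y = (I, f1, f2)" by (rule prod_cases3)
    have I: "I \<subseteq> H" "card I = card P" using y yy by (auto simp: Iset_def)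
    have f1: "f1 \<in> I \<rightarrow>\<^sub>E P" "bij_betw f1 I P" using y yy by (auto simp: bijs_def)
    have f2: "f2 \<in> (H-I) \<rightarrow>\<^sub>E Q" "bij_betw f2 (H-I) Q" using y yy by (auto simp: bijs_def)
    have r1: "restrict (merge I f1 f2) I = f1"
    proof
      fix x show "restrict (merge I f1 f2) I x = f1 x"
        by (cases "x \<in> I") (simp_all add: merge_def PiE_arb[OF f1(1)])
    qed
    have r2: "restrict (merge I f1 f2) (H-I) = f2"
    proof
      fix x show "restrict (merge I f1 f2) (H-I) x = f2 x"
        by (cases "x \<in> H - I") (auto simp: merge_def PiE_arb[OF f2(1)])
    qed
    show "(\<lambda>(I,g). (I, restrict g I, restrict g (H-I))) ((\<lambda>(I,f1,f2). (I, merge I f1 f2)) y) = y"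
      using r1 r2 yy by simp
    have m1: "bij_betw (merge I f1 f2) I P" by (rule bij_betw_cong[THEN iffD1, OF _ f1(2)]) (simp add: merge_def)
    have m2: "bij_betw (merge I f1 f2) (H-I) Q" by (rule bij_betw_cong[THEN iffD1, OF _ f2(2)]) (simp add: merge_def)
    have mE: "merge I f1 f2 \<in> H \<rightarrow>\<^sub>E (P \<union> Q)"
    proof (rule PiE_I)
      fix x assume "x \<in> H" then show "merge I f1 f2 x \<in> P \<union> Q"
        using f1(1) f2(1) by (cases "x \<in> I") (auto simp: merge_def)
    next
      fix x assume "x \<notin> H" then show "merge I f1 f2 x = undefined"
        using I(1) PiE_arb[OF f2(1)] by (auto simp: merge_def)
    qed
    show "(\<lambda>(I,f1,f2). (I, merge I f1 f2)) y \<in> Sset H P Q"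
      using yy I m1 m2 mE by (simp add: Sset_def)
    have inv1: "invc I (merge I f1 f2) = invc I f1" by (rule invc_cong) (simp add: merge_def)
    have inv2: "invc (H-I) (merge I f1 f2) = invc (H-I) f2" by (rule invc_cong) (simp add: merge_def)
    have "(\<Prod>h\<in>H. M$h$(merge I f1 f2 h)) = (\<Prod>h\<in>H-I. M$h$(merge I f1 f2 h)) * (\<Prod>h\<in>I. M$h$(merge I f1 f2 h))"
      by (rule prod.subset_diff[OF I(1)]) simp
    also have "\<dots> = (\<Prod>h\<in>H-I. M$h$(f2 h)) * (\<Prod>h\<in>I. M$h$(f1 h))"
      by (simp add: merge_def)
    finally have pr: "(\<Prod>h\<in>H. M$h$(merge I f1 f2 h)) = (\<Prod>h\<in>H-I. M$h$(f2 h)) * (\<Prod>h\<in>I. M$h$(f1 h))" .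
    show "(\<lambda>(I,g). (-1)^(s_pos H I + invc I g + invc (H-I) g) * (\<Prod>h\<in>H. M$h$(g h))) ((\<lambda>(I,f1,f2). (I, merge I f1 f2)) y) = F y"
      using yy inv1 inv2 pr by (simp add: F_def power_add mult_ac)
  next
    fix z assume z: "z \<in> Sset H P Q"
    obtain I g where zz: "z = (I, g)" by (rule prod.exhaust)
    have I: "I \<subseteq> H" and gE: "g \<in> H \<rightarrow>\<^sub>E (P \<union> Q)" and b1: "bij_betw g I P" and b2: "bij_betw g (H-I) Q"
      using z zz by (auto simp: Sset_def)
    have "merge I (restrict g I) (restrict g (H-I)) = g"
    proof
      fix x show "merge I (restrict g I) (restrict g (H-I)) x = g x"
      proof (cases "x \<in> H")
        case True then show ?thesis by (cases "x \<in> I") (simp_all add: merge_def)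
      next
        case False then show ?thesis using I PiE_arb[OF gE False] by (auto simp: merge_def)
      qed
    qed
    then show "(\<lambda>(I,f1,f2). (I, merge I f1 f2)) ((\<lambda>(I,g). (I, restrict g I, restrict g (H-I))) z) = z"
      using zz by simp
    have c: "card I = card P" by (rule bij_betw_same_card[OF b1])
    have rb1: "restrict g I \<in> bijs I P"
      unfolding bijs_def using bij_betwE[OF b1] bij_betw_cong[THEN iffD1, OF _ b1, of "restrict g I"] by simp
    have rb2: "restrict g (H-I) \<in> bijs (H-I) Q"
      unfolding bijs_def using bij_betwE[OF b2] bij_betw_cong[THEN iffD1, OF _ b2, of "restrict g (H-I)"] by simp
    show "(\<lambda>(I,g). (I, restrict g I, restrict g (H-I))) z \<in> Sigma Iset (\<lambda>I. bijs I P \<times> bijs (H-I) Q)"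
      using zz I c rb1 rb2 by (simp add: Iset_def)
  qed
  finally show ?thesis unfolding Iset_def .
qed

lemma ZZ_eq:
  fixes g :: "'a::{finite,linorder} \<Rightarrow> 'a"
  assumes bI: "bij_betw g I P" and bD: "bij_betw g D Q"
  shows "ZZ I g D = (\<Sum>x\<in>P\<inter>Q. if inv_into I g x < inv_into D g x then 1 else 0)"
proof -
  define G where "G = (\<lambda>x. if x \<in> Q then (if inv_into I g x < inv_into D g x then 1 else 0) else (0::nat))"
  have inner: "(\<Sum>b\<in>D. if a < b \<and> g a = g b then 1 else 0) = G (g a)" if a: "a \<in> I" for a
  proof (cases "g a \<in> Q")
    case True
    define b0 where "b0 = inv_into D g (g a)"
    have b0D: "b0 \<in> D" unfolding b0_def using True bij_betwE[OF bij_betw_inv_into[OF bD]] by simp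
    have gb0: "g b0 = g a" unfolding b0_def using True bij_betw_inv_into_right[OF bD] by simp
    have eq: "g a = g b \<longleftrightarrow> b = b0" if "b \<in> D" for b
      using that b0D gb0 bij_betw_imp_inj_on[OF bD] unfolding inj_on_def by metis
    have "(\<Sum>b\<in>D. if a < b \<and> g a = g b then 1 else (0::nat)) = (\<Sum>b\<in>D. if b = b0 then (if a < b0 then 1 else 0) else 0)"
      by (rule sum.cong[OF refl]) (use eq in auto)
    also have "\<dots> = (if a < b0 then 1 else 0)" using b0D by simp
    also have "inv_into I g (g a) = a" by (rule bij_betw_inv_into_left[OF bI a])
    then have "(if a < b0 then 1 else (0::nat)) = G (g a)" unfolding G_def b0_def using True by simp
    finally show ?thesis .
  next
    case False
    have "g a \<noteq> g b" if "b \<in> D" for b using False bij_betwE[OF bD] that by auto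
    then have "(\<Sum>b\<in>D. if a < b \<and> g a = g b then 1 else (0::nat)) = 0" by simp
    then show ?thesis unfolding G_def using False by simp
  qed
  have "ZZ I g D = (\<Sum>a\<in>I. G (g a))" unfolding ZZ_def using inner by simp
  also have "\<dots> = (\<Sum>x\<in>P. G x)" by (rule sum.reindex_bij_betw[OF bI])
  also have "\<dots> = (\<Sum>x\<in>{x\<in>P. x \<in> Q}. if inv_into I g x < inv_into D g x then 1 else 0)"
    unfolding G_def by (rule sum.inter_filter[symmetric]) simp
  also have "{x\<in>P. x \<in> Q} = P \<inter> Q" by auto
  finally show ?thesis .
qed

definition c0 :: "'a::{finite,linorder} set \<Rightarrow> 'a set \<Rightarrow> nat" where
  "c0 P Q = s_pos P P + card P * card Q + YY P Q"

lemma term_form: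
  fixes H :: "'a::{finite,linorder} set"
  assumes "(I,g) \<in> Sset H P Q"
  shows "(-1::complex)^(s_pos H I + invc I g + invc (H-I) g) = (-1)^(c0 P Q) * (-1)^(invc H g) * (-1)^(ZZ I g (H-I))"
proof -
  have "I \<subseteq> H" "bij_betw g I P" "bij_betw g (H-I) Q" using assms by (auto simp: Sset_def)
  from parity[OF this] show ?thesis by (simp add: c0_def power_add)
qed

lemma lap_nondeg:
  fixes M :: "((complex, 'n::{finite,linorder}) vec, 'n) vec"
  assumes dis: "P \<inter> Q = {}"
  shows "(\<Sum>(I,g)\<in>Sset H P Q. (-1)^(s_pos H I + invc I g + invc (H-I) g) * (\<Prod>h\<in>H. M$h$(g h)))
     = (-1)^(s_pos (P \<union> Q) P) * dsub M H (P \<union> Q)"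
proof -
  have "(\<Sum>(I,g)\<in>Sset H P Q. (-1)^(s_pos H I + invc I g + invc (H-I) g) * (\<Prod>h\<in>H. M$h$(g h)))
      = (\<Sum>(I,g)\<in>Sset H P Q. (-1)^(c0 P Q) * ((-1)^(invc H g) * (\<Prod>h\<in>H. M$h$(g h))))"
  proof (rule sum.cong[OF refl])
    fix z assume z: "z \<in> Sset H P Q"
    obtain I g where zz: "z = (I,g)" by (rule prod.exhaust)
    have b1: "bij_betw g I P" and b2: "bij_betw g (H-I) Q" using z zz by (auto simp: Sset_def)
    have "ZZ I g (H-I) = 0" unfolding ZZ_eq[OF b1 b2] using dis by simp
    then show "(case z of (I,g) \<Rightarrow> (-1)^(s_pos H I + invc I g + invc (H-I) g) * (\<Prod>h\<in>H. M$h$(g h)))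
       = (case z of (I,g) \<Rightarrow> (-1)^(c0 P Q) * ((-1)^(invc H g) * (\<Prod>h\<in>H. M$h$(g h))))"
      using term_form[OF z[unfolded zz]] zz by simp
  qed
  also have "\<dots> = (-1)^(c0 P Q) * (\<Sum>(I,g)\<in>Sset H P Q. (-1)^(invc H g) * (\<Prod>h\<in>H. M$h$(g h)))"
    by (simp add: sum_distrib_left case_prod_beta)
  also have "(\<Sum>(I,g)\<in>Sset H P Q. (-1)^(invc H g) * (\<Prod>h\<in>H. M$h$(g h))) = dsub M H (P \<union> Q)"
    unfolding dsub_def
  proof (rule sum.reindex_bij_witness[where j = "\<lambda>(I,g). g" and i = "\<lambda>g. ({h\<in>H. g h \<in> P}, g)"])
    fix z assume z: "z \<in> Sset H P Q"
    obtain I g where zz: "z = (I,g)" by (rule prod.exhaust)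
    have I: "I \<subseteq> H" and gE: "g \<in> H \<rightarrow>\<^sub>E (P \<union> Q)" and b1: "bij_betw g I P" and b2: "bij_betw g (H-I) Q"
      using z zz by (auto simp: Sset_def)
    have "{h\<in>H. g h \<in> P} = I"
    proof (rule set_eqI, rule iffI)
      fix h assume h: "h \<in> {h\<in>H. g h \<in> P}"
      show "h \<in> I"
      proof (rule ccontr)
        assume "h \<notin> I"
        then have "g h \<in> Q" using h bij_betwE[OF b2] by auto
        then show False using h dis by auto
      qed
    next
      fix h assume "h \<in> I" then show "h \<in> {h\<in>H. g h \<in> P}" using I bij_betwE[OF b1] by auto
    qed
    then show "(\<lambda>g. ({h\<in>H. g h \<in> P}, g)) ((\<lambda>(I,g). g) z) = z" using zz by simp
    have "bij_betw g (I \<union> (H-I)) (P \<union> Q)" by (rule bij_betw_combine[OF b1 b2 dis])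
    moreover have "I \<union> (H-I) = H" using I by auto
    ultimately have "bij_betw g H (P \<union> Q)" by simp
    then show "(\<lambda>(I,g). g) z \<in> bijs H (P \<union> Q)" unfolding bijs_def using gE zz by simp
    show "(-1)^(invc H ((\<lambda>(I,g). g) z)) * (\<Prod>h\<in>H. M$h$((\<lambda>(I,g). g) z h)) = (\<lambda>(I,g). (-1)^(invc H g) * (\<Prod>h\<in>H. M$h$(g h))) z"
      using zz by simp
  next
    fix g assume "g \<in> bijs H (P \<union> Q)"
    then have gE: "g \<in> H \<rightarrow>\<^sub>E (P \<union> Q)" and gb: "bij_betw g H (P \<union> Q)" unfolding bijs_def by auto
    show "(\<lambda>(I,g). g) ((\<lambda>g. ({h\<in>H. g h \<in> P}, g)) g) = g" by simp
    define I where "I = {h\<in>H. g h \<in> P}"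
    have inj: "inj_on g H" using gb by (simp add: bij_betw_def)
    have img: "g ` H = P \<union> Q" using gb by (simp add: bij_betw_def)
    have "g ` I = P"
    proof (rule set_eqI, rule iffI)
      fix x assume "x \<in> g ` I" then show "x \<in> P" unfolding I_def by auto
    next
      fix x assume x: "x \<in> P"
      then have "x \<in> g ` H" using img by simp
      then obtain h where "h \<in> H" "x = g h" by blast
      then show "x \<in> g ` I" unfolding I_def using x by blast
    qed
    moreover have "g ` (H - I) = Q"
    proof (rule set_eqI, rule iffI)
      fix x assume "x \<in> g ` (H - I)"
      then obtain h where h: "h \<in> H" "h \<notin> I" "x = g h" by blast
      then have "g h \<in> P \<union> Q" using img by blast
      then show "x \<in> Q" using h unfolding I_def by auto
    next
      fix x assume x: "x \<in> Q"
      then have "x \<in> g ` H" using img by simp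
      then obtain h where h: "h \<in> H" "x = g h" by blast
      have "h \<notin> I" unfolding I_def using h x dis by auto
      then show "x \<in> g ` (H - I)" using h by blast
    qed
    moreover have "inj_on g I" "inj_on g (H-I)" using inj unfolding I_def by (auto intro: inj_on_subset)
    ultimately have "bij_betw g I P" "bij_betw g (H-I) Q" by (auto simp: bij_betw_def)
    then show "(\<lambda>g. ({h\<in>H. g h \<in> P}, g)) g \<in> Sset H P Q" unfolding Sset_def using gE I_def by auto
  qed
  also have "(-1::complex)^(c0 P Q) = (-1)^(s_pos (P \<union> Q) P)"
  proof -
    have PU: "P \<subseteq> P \<union> Q" by auto
    have UP: "(P \<union> Q) - P = Q" using dis by auto
    have "s_pos (P \<union> Q) P + YY P Q = s_pos P P + card P * card Q"
      using spos_split[OF PU] unfolding UP YY_def by simp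
    then have "c0 P Q = s_pos (P \<union> Q) P + 2 * YY P Q" unfolding c0_def by simp
    then show ?thesis by (simp add: neg1_pow_add2)
  qed
  finally show ?thesis .
qed

definition tau :: "'a \<Rightarrow> 'a set \<Rightarrow> 'a set \<times> ('a \<Rightarrow> 'a) \<Rightarrow> 'a set \<times> ('a \<Rightarrow> 'a)" where
  "tau x0 H z = (case z of (I,g) \<Rightarrow> ((I - {inv_into I g x0}) \<union> {inv_into (H-I) g x0}, g))"

lemma neg1_flip: "a + b = 1 + 2*k \<Longrightarrow> (-1::complex)^a = - ((-1)^b)"
proof -
  assume h: "a + b = 1 + 2*k"
  then have "odd (a + b)" by simp
  then have "even a \<longleftrightarrow> odd b" by auto
  then show ?thesis by (cases "even b") (simp_all add: neg_one_even_power neg_one_odd_power)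
qed

lemma tau_props:
  fixes H :: "'a::{finite,linorder} set"
  assumes x0: "x0 \<in> P \<inter> Q" and z: "(I,g) \<in> Sset H P Q"
  defines "I' \<equiv> fst (tau x0 H (I,g))"
  shows "tau x0 H (I,g) = (I', g)" "(I', g) \<in> Sset H P Q" "tau x0 H (I', g) = (I, g)"
    "(-1::complex)^(ZZ I' g (H-I')) = - ((-1)^(ZZ I g (H-I)))"
proof -
  have IH: "I \<subseteq> H" and gE: "g \<in> H \<rightarrow>\<^sub>E (P \<union> Q)" and bI: "bij_betw g I P" and bD: "bij_betw g (H-I) Q"
    using z by (auto simp: Sset_def)
  define D where "D = H - I"
  define a0 where "a0 = inv_into I g x0"
  define b0 where "b0 = inv_into D g x0"
  have x0P: "x0 \<in> P" and x0Q: "x0 \<in> Q" using x0 by auto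
  have a0I: "a0 \<in> I" unfolding a0_def using bij_betwE[OF bij_betw_inv_into[OF bI]] x0P by simp
  have ga0: "g a0 = x0" unfolding a0_def using bij_betw_inv_into_right[OF bI x0P] .
  have b0D: "b0 \<in> D" unfolding b0_def D_def using bij_betwE[OF bij_betw_inv_into[OF bD]] x0Q by simp
  have gb0: "g b0 = x0" unfolding b0_def D_def using bij_betw_inv_into_right[OF bD x0Q] .
  have b0I: "b0 \<notin> I" using b0D by (simp add: D_def)
  have a0D: "a0 \<notin> D" using a0I by (simp add: D_def)
  have ab: "a0 \<noteq> b0" using a0I b0I by auto
  have I'def: "I' = (I - {a0}) \<union> {b0}" unfolding I'_def tau_def a0_def b0_def D_def by simp
  show t1: "tau x0 H (I,g) = (I', g)" unfolding tau_def I'def a0_def b0_def D_def by simp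
  have I'H: "I' \<subseteq> H" unfolding I'def using IH b0D by (auto simp: D_def)
  have D': "H - I' = (D - {b0}) \<union> {a0}"
    unfolding I'def D_def using IH a0I b0D ab by (auto simp: D_def)
  have bI': "bij_betw g I' P"
  proof -
    have "bij_betw g (I - {a0}) (P - {x0})"
      by (rule bij_betw_DiffI[OF bI]) (use a0I x0P ga0 in auto)
    then have "bij_betw g ((I - {a0}) \<union> {b0}) ((P - {x0}) \<union> {x0})"
      by (rule bij_betw_combine) (use gb0 in auto)
    moreover have "(P - {x0}) \<union> {x0} = P" using x0P by auto
    ultimately show ?thesis unfolding I'def by simp
  qed
  have bD': "bij_betw g (H - I') Q"
  proof -
    have bD0: "bij_betw g D Q" using bD by (simp add: D_def)
    have "bij_betw g (D - {b0}) (Q - {x0})"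
      by (rule bij_betw_DiffI[OF bD0]) (use b0D x0Q gb0 in auto)
    then have "bij_betw g ((D - {b0}) \<union> {a0}) ((Q - {x0}) \<union> {x0})"
      by (rule bij_betw_combine) (use ga0 in auto)
    moreover have "(Q - {x0}) \<union> {x0} = Q" using x0Q by auto
    ultimately show ?thesis unfolding D' by simp
  qed
  show "(I', g) \<in> Sset H P Q" unfolding Sset_def using I'H gE bI' bD' by simp
  have injI': "inj_on g I'" and injD': "inj_on g (H - I')" using bI' bD' by (auto simp: bij_betw_def)
  have injI: "inj_on g I" and injD: "inj_on g D" using bI bD by (auto simp: bij_betw_def D_def)
  have b0I': "b0 \<in> I'" and a0D': "a0 \<in> H - I'" using D' by (auto simp: I'def)
  have ia': "inv_into I' g x0 = b0" by (rule inv_into_f_eq[OF injI' b0I' gb0])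
  have ib': "inv_into (H - I') g x0 = a0" by (rule inv_into_f_eq[OF injD' a0D' ga0])
  have "tau x0 H (I', g) = ((I' - {b0}) \<union> {a0}, g)" unfolding tau_def using ia' ib' by simp
  also have "(I' - {b0}) \<union> {a0} = I" unfolding I'def using a0I b0I by auto
  finally show "tau x0 H (I', g) = (I, g)" .
  define t where "t = (\<lambda>A B x. if inv_into A g x < inv_into B g x then 1 else (0::nat))"
  have Z: "ZZ I g D = t I D x0 + (\<Sum>x\<in>P \<inter> Q - {x0}. t I D x)"
    unfolding ZZ_eq[OF bI bD[folded D_def]] t_def by (rule sum.remove) (simp_all add: x0P x0Q)
  have Z': "ZZ I' g (H - I') = t I' (H - I') x0 + (\<Sum>x\<in>P \<inter> Q - {x0}. t I' (H - I') x)"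
    unfolding ZZ_eq[OF bI' bD'] t_def by (rule sum.remove) (simp_all add: x0P x0Q)
  have same: "t I' (H - I') x = t I D x" if x: "x \<in> P \<inter> Q - {x0}" for x
  proof -
    have xP: "x \<in> P" and xQ: "x \<in> Q" and xx: "x \<noteq> x0" using x by auto
    define a where "a = inv_into I g x"
    define b where "b = inv_into D g x"
    have aI: "a \<in> I" unfolding a_def using bij_betwE[OF bij_betw_inv_into[OF bI]] xP by simp
    have ga: "g a = x" unfolding a_def using bij_betw_inv_into_right[OF bI xP] .
    have bD2: "b \<in> D" unfolding b_def using bij_betwE[OF bij_betw_inv_into[OF bD[folded D_def]]] xQ by simp
    have gb: "g b = x" unfolding b_def using bij_betw_inv_into_right[OF bD[folded D_def] xQ] .
    have "a \<noteq> a0" using ga ga0 xx by auto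
    then have "a \<in> I'" unfolding I'def using aI by simp
    then have "inv_into I' g x = a" by (rule inv_into_f_eq[OF injI' _ ga])
    moreover have "b \<noteq> b0" using gb gb0 xx by auto
    then have "b \<in> H - I'" unfolding D' using bD2 by simp
    then have "inv_into (H - I') g x = b" by (rule inv_into_f_eq[OF injD' _ gb])
    ultimately show ?thesis unfolding t_def a_def b_def by simp
  qed
  have S: "(\<Sum>x\<in>P \<inter> Q - {x0}. t I' (H - I') x) = (\<Sum>x\<in>P \<inter> Q - {x0}. t I D x)"
    by (rule sum.cong[OF refl]) (rule same)
  have t0: "t I D x0 + t I' (H - I') x0 = 1"
    unfolding t_def ia' ib' using ab by (simp add: a0_def[symmetric] b0_def[symmetric]) (auto simp: a0_def b0_def)
  have "ZZ I' g (H - I') + ZZ I g (H - I) = 1 + 2 * (\<Sum>x\<in>P \<inter> Q - {x0}. t I D x)"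
    using Z Z' S t0 unfolding D_def by simp
  then show "(-1::complex)^(ZZ I' g (H-I')) = - ((-1)^(ZZ I g (H-I)))" by (rule neg1_flip)
qed

lemma lap_deg:
  fixes M :: "((complex, 'n::{finite,linorder}) vec, 'n) vec"
  assumes ne: "P \<inter> Q \<noteq> {}"
  shows "(\<Sum>(I,g)\<in>Sset H P Q. (-1)^(s_pos H I + invc I g + invc (H-I) g) * (\<Prod>h\<in>H. M$h$(g h))) = 0"
proof -
  obtain x0 where x0: "x0 \<in> P \<inter> Q" using ne by blast
  define T where "T = (\<lambda>(I,g). (-1::complex)^(s_pos H I + invc I g + invc (H-I) g) * (\<Prod>h\<in>H. M$h$(g h)))"
  have neg: "T (tau x0 H z) = - T z" if z: "z \<in> Sset H P Q" for z
  proof -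
    obtain I g where zz: "z = (I,g)" by (rule prod.exhaust)
    have zS: "(I,g) \<in> Sset H P Q" using z zz by simp
    define I' where "I' = fst (tau x0 H (I,g))"
    note tp = tau_props[OF x0 zS, folded I'_def]
    have "T (tau x0 H z) = T (I', g)" using tp(1) zz by simp
    also have "\<dots> = (-1)^(c0 P Q) * (-1)^(invc H g) * (-1)^(ZZ I' g (H-I')) * (\<Prod>h\<in>H. M$h$(g h))"
      unfolding T_def using term_form[OF tp(2)] by simp
    also have "\<dots> = - ((-1)^(c0 P Q) * (-1)^(invc H g) * (-1)^(ZZ I g (H-I)) * (\<Prod>h\<in>H. M$h$(g h)))"
      using tp(4) by simp
    also have "\<dots> = - T z" unfolding T_def zz using term_form[OF zS] by simp
    finally show ?thesis .
  qed
  have "(\<Sum>z\<in>Sset H P Q. T (tau x0 H z)) = (\<Sum>z\<in>Sset H P Q. T z)"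
  proof (rule sum.reindex_bij_witness[where i = "tau x0 H" and j = "tau x0 H"])
    fix z assume z: "z \<in> Sset H P Q"
    obtain I g where zz: "z = (I,g)" by (rule prod.exhaust)
    have zS: "(I,g) \<in> Sset H P Q" using z zz by simp
    define I' where "I' = fst (tau x0 H (I,g))"
    note tp = tau_props[OF x0 zS, folded I'_def]
    show "tau x0 H (tau x0 H z) = z" using tp zz by simp
    show "tau x0 H z \<in> Sset H P Q" using tp zz by simp
    show "tau x0 H (tau x0 H z) = z" using tp zz by simp
    show "tau x0 H z \<in> Sset H P Q" using tp zz by simp
    show "T (tau x0 H z) = T (tau x0 H z)" ..
  qed
  also have "(\<Sum>z\<in>Sset H P Q. T (tau x0 H z)) = - (\<Sum>z\<in>Sset H P Q. T z)"
    using neg by (simp add: sum_negf)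
  finally have "(\<Sum>z\<in>Sset H P Q. T z) = 0" by simp
  then show ?thesis unfolding T_def .
qed

theorem laplace:
  fixes M :: "((complex, 'n::{finite,linorder}) vec, 'n) vec"
  shows "(\<Sum>I\<in>{I. I \<subseteq> H \<and> card I = card P}. (-1)^(s_pos H I) * dsub M I P * dsub M (H - I) Q)
     = (if P \<inter> Q = {} then (-1)^(s_pos (P \<union> Q) P) * dsub M H (P \<union> Q) else 0)"
  unfolding lap_S using lap_nondeg[of P Q] lap_deg[of P Q] by auto

lemma card_compl: "card (UNIV - (A::'a::finite set)) = CARD('a) - card A"
  by (simp add: card_Diff_subset)

lemma subset_card_eq: "(H::'a::finite set) \<subseteq> I \<Longrightarrow> card H = card I \<Longrightarrow> H = I"
  by (simp add: card_subset_eq)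

lemma lapU2:
  fixes M :: "((complex, 'n::{finite,linorder}) vec, 'n) vec" and K R :: "'n set"
  assumes c: "card K = card R"
  shows "(\<Sum>(I::'n set)\<in>Pp (card K). (-1)^(sum_elems I) * det_sub M I K * det_sub M (UNIV - I) (UNIV - R))
       = (if K = R then (-1)^(sum_elems K) * det M else 0)"
proof -
  have L: "(\<Sum>I\<in>{I. I \<subseteq> UNIV \<and> card I = card K}. (-1)^(s_pos UNIV I) * dsub M I K * dsub M (UNIV - I) (UNIV - R))
     = (if K \<inter> (UNIV - R) = {} then (-1)^(s_pos (K \<union> (UNIV - R)) K) * dsub M UNIV (K \<union> (UNIV - R)) else 0)"
    by (rule laplace)
  have setI: "{I. I \<subseteq> UNIV \<and> card I = card K} = Pp (card K)" by (simp add: Pp_def)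
  have lhs: "(\<Sum>(I::'n set)\<in>Pp (card K). (-1)^(sum_elems I) * det_sub M I K * det_sub M (UNIV - I) (UNIV - R))
      = (\<Sum>I\<in>{I. I \<subseteq> UNIV \<and> card I = card K}. (-1)^(s_pos UNIV I) * dsub M I K * dsub M (UNIV - I) (UNIV - R))"
    unfolding setI
  proof (rule sum.cong[OF refl])
    fix I :: "'n set" assume "I \<in> Pp (card K)"
    then have cI: "card I = card K" by (simp add: Pp_def)
    have "det_sub M I K = dsub M I K" by (rule det_sub_dsub[OF cI])
    moreover have "det_sub M (UNIV - I) (UNIV - R) = dsub M (UNIV - I) (UNIV - R)"
      by (rule det_sub_dsub) (simp add: card_compl cI c)
    ultimately show "(-1)^(sum_elems I) * det_sub M I K * det_sub M (UNIV - I) (UNIV - R)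
       = (-1)^(s_pos UNIV I) * dsub M I K * dsub M (UNIV - I) (UNIV - R)"
      by (simp add: sum_elems_def s_pos_def)
  qed
  show ?thesis
  proof (cases "K = R")
    case True
    then have "K \<inter> (UNIV - R) = {}" "K \<union> (UNIV - R) = UNIV" by auto
    then show ?thesis using L lhs True by (simp add: dsub_det sum_elems_def s_pos_def)
  next
    case False
    have "K \<inter> (UNIV - R) \<noteq> {}"
    proof
      assume "K \<inter> (UNIV - R) = {}"
      then have "K \<subseteq> R" by auto
      then show False using subset_card_eq c False by blast
    qed
    then show ?thesis using L lhs False by simp
  qed
qed

lemma lapU:
  fixes M :: "((complex, 'n::{finite,linorder}) vec, 'n) vec" and H I :: "'n set"
  assumes c: "card H = card I"
  shows "(\<Sum>(R::'n set)\<in>Pp (card H). (-1)^(sum_elems R) * det_sub M H R * det_sub M (UNIV - I) (UNIV - R))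
       = (if H = I then (-1)^(sum_elems H) * det M else 0)"
proof -
  have "(\<Sum>(R::'n set)\<in>Pp (card H). (-1)^(sum_elems R) * det_sub M H R * det_sub M (UNIV - I) (UNIV - R))
      = (\<Sum>(R::'n set)\<in>Pp (card H). (-1)^(sum_elems R) * det_sub (transpose M) R H * det_sub (transpose M) (UNIV - R) (UNIV - I))"
  proof (rule sum.cong[OF refl])
    fix R :: "'n set" assume "R \<in> Pp (card H)"
    then have cR: "card R = card H" by (simp add: Pp_def)
    have "det_sub (transpose M) R H = det_sub M H R"
      using det_sub_dsub[OF cR] det_sub_dsub[OF cR[symmetric]] dsub_transpose by metis
    moreover have cc: "card (UNIV - R) = card (UNIV - I)" by (simp add: card_compl cR c)
    have "det_sub (transpose M) (UNIV - R) (UNIV - I) = det_sub M (UNIV - I) (UNIV - R)"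
      using det_sub_dsub[OF cc] det_sub_dsub[OF cc[symmetric]] dsub_transpose by metis
    ultimately show "(-1)^(sum_elems R) * det_sub M H R * det_sub M (UNIV - I) (UNIV - R)
       = (-1)^(sum_elems R) * det_sub (transpose M) R H * det_sub (transpose M) (UNIV - R) (UNIV - I)" by simp
  qed
  also have "\<dots> = (if H = I then (-1)^(sum_elems H) * det (transpose M) else 0)"
    by (rule lapU2[OF c])
  finally show ?thesis by simp
qed

lemma wid_left: "H \<in> Pp p \<Longrightarrow> (\<Sum>L\<in>Pp p. wid p H L * Z L K) = Z H K"
proof -
  assume H: "H \<in> Pp p"
  have "(\<Sum>L\<in>Pp p. wid p H L * Z L K) = (\<Sum>L\<in>Pp p. if H = L then Z L K else 0)"
    by (rule sum.cong[OF refl]) (use H in \<open>simp add: wid_def\<close>)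
  also have "\<dots> = Z H K" using H by simp
  finally show ?thesis .
qed

lemma wid_right: "K \<in> Pp p \<Longrightarrow> (\<Sum>L\<in>Pp p. Z H L * wid p L K) = Z H K"
proof -
  assume K: "K \<in> Pp p"
  have "(\<Sum>L\<in>Pp p. Z H L * wid p L K) = (\<Sum>L\<in>Pp p. if L = K then Z H L else 0)"
    by (rule sum.cong[OF refl]) (use K in \<open>auto simp add: wid_def\<close>)
  also have "\<dots> = Z H K" using K by simp
  finally show ?thesis .
qed

lemma wmult_assoc: "wmult p (wmult p X Y) Z = wmult p X (wmult p Y Z)"
proof (intro ext)
  fix H K
  have "(\<Sum>L\<in>Pp p. (\<Sum>L'\<in>Pp p. X H L' * Y L' L) * Z L K) = (\<Sum>L\<in>Pp p. \<Sum>L'\<in>Pp p. X H L' * Y L' L * Z L K)"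
    by (simp add: sum_distrib_right)
  also have "\<dots> = (\<Sum>L'\<in>Pp p. \<Sum>L\<in>Pp p. X H L' * Y L' L * Z L K)" by (rule sum.swap)
  also have "\<dots> = (\<Sum>L'\<in>Pp p. X H L' * (\<Sum>L\<in>Pp p. Y L' L * Z L K))"
    by (simp add: sum_distrib_left mult.assoc)
  finally show "wmult p (wmult p X Y) Z H K = wmult p X (wmult p Y Z) H K" by (simp add: wmult_def)
qed

definition isinv :: "nat \<Rightarrow> ('n::finite) wmat \<Rightarrow> 'n wmat \<Rightarrow> bool" where
  "isinv p X Y \<longleftrightarrow> (\<forall>H\<in>Pp p. \<forall>K\<in>Pp p. wmult p X Y H K = wid p H K \<and> wmult p Y X H K = wid p H K)
                  \<and> (\<forall>H K. H \<notin> Pp p \<or> K \<notin> Pp p \<longrightarrow> Y H K = 0)"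

lemma winv_unique:
  assumes Y: "isinv p X Y"
  shows "winv p X = Y"
  unfolding winv_def
proof (rule the_equality)
  show "(\<forall>H\<in>Pp p. \<forall>K\<in>Pp p. wmult p X Y H K = wid p H K \<and> wmult p Y X H K = wid p H K)
          \<and> (\<forall>H K. H \<notin> Pp p \<or> K \<notin> Pp p \<longrightarrow> Y H K = 0)" using Y by (simp add: isinv_def)
next
  fix Y' assume Y': "(\<forall>H\<in>Pp p. \<forall>K\<in>Pp p. wmult p X Y' H K = wid p H K \<and> wmult p Y' X H K = wid p H K)
          \<and> (\<forall>H K. H \<notin> Pp p \<or> K \<notin> Pp p \<longrightarrow> Y' H K = 0)"
  show "Y' = Y"
  proof (intro ext)
    fix H K
    show "Y' H K = Y H K"
    proof (cases "H \<in> Pp p \<and> K \<in> Pp p")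
      case True
      then have H: "H \<in> Pp p" and K: "K \<in> Pp p" by auto
      have "Y' H K = (\<Sum>L\<in>Pp p. wid p H L * Y' L K)" by (rule wid_left[OF H, symmetric])
      also have "\<dots> = (\<Sum>L\<in>Pp p. wmult p Y X H L * Y' L K)"
        by (rule sum.cong[OF refl]) (use Y H in \<open>simp add: isinv_def\<close>)
      also have "\<dots> = wmult p (wmult p Y X) Y' H K" by (simp add: wmult_def)
      also have "\<dots> = wmult p Y (wmult p X Y') H K" by (simp add: wmult_assoc)
      also have "\<dots> = (\<Sum>L\<in>Pp p. Y H L * wid p L K)" unfolding wmult_def
        by (rule sum.cong[OF refl]) (use Y' K in \<open>simp add: wmult_def\<close>)
      also have "\<dots> = Y H K" by (rule wid_right[OF K])
      finally show ?thesis .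
    next
      case False
      then show ?thesis using Y Y' unfolding isinv_def by auto
    qed
  qed
qed

lemma wtrans_wmult: "wmult p (wtrans X) (wtrans Y) = wtrans (wmult p Y X)"
  by (intro ext) (simp add: wmult_def wtrans_def mult.commute)

lemma isinv_trans: "isinv p X Y \<Longrightarrow> isinv p (wtrans X) (wtrans Y)"
  unfolding isinv_def wtrans_wmult by (auto simp: wtrans_def wid_def)

definition Zm :: "((complex, 'n::{finite,linorder}) vec, 'n) vec \<Rightarrow> nat \<Rightarrow> 'n wmat" where
  "Zm M p = (\<lambda>R I. if R \<in> Pp p \<and> I \<in> Pp p then
      (-1)^(sum_elems R + sum_elems I) * det_sub M (UNIV - I) (UNIV - R) / det M else 0)"

lemma isinv_Zm:
  fixes M :: "((complex, 'n::{finite,linorder}) vec, 'n) vec"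
  assumes d: "det M \<noteq> 0"
  shows "isinv p (ext_pow p M) (Zm M p)"
  unfolding isinv_def
proof (intro conjI ballI allI impI)
  fix H K :: "'n set" assume H: "H \<in> Pp p" and K: "K \<in> Pp p"
  have cH: "card H = p" and cK: "card K = p" using H K by (auto simp: Pp_def)
  have "wmult p (ext_pow p M) (Zm M p) H K
      = (\<Sum>R\<in>Pp p. (-1)^(sum_elems K) / det M * ((-1)^(sum_elems R) * det_sub M H R * det_sub M (UNIV - K) (UNIV - R)))"
    unfolding wmult_def
    by (rule sum.cong[OF refl]) (use H K in \<open>simp add: ext_pow_def Zm_def power_add\<close>)
  also have "\<dots> = (-1)^(sum_elems K) / det M * (\<Sum>R\<in>Pp p. (-1)^(sum_elems R) * det_sub M H R * det_sub M (UNIV - K) (UNIV - R))"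
    by (simp add: sum_distrib_left)
  also have "(\<Sum>R\<in>Pp p. (-1)^(sum_elems R) * det_sub M H R * det_sub M (UNIV - K) (UNIV - R))
      = (if H = K then (-1)^(sum_elems H) * det M else 0)"
    using lapU[of H K M] cH cK by simp
  finally show "wmult p (ext_pow p M) (Zm M p) H K = wid p H K"
    using H K d by (auto simp: wid_def power_add[symmetric] power_mult_distrib[symmetric])
  have "wmult p (Zm M p) (ext_pow p M) H K
      = (\<Sum>I\<in>Pp p. (-1)^(sum_elems H) / det M * ((-1)^(sum_elems I) * det_sub M I K * det_sub M (UNIV - I) (UNIV - H)))"
    unfolding wmult_def
    by (rule sum.cong[OF refl]) (use H K in \<open>simp add: ext_pow_def Zm_def power_add\<close>)
  also have "\<dots> = (-1)^(sum_elems H) / det M * (\<Sum>I\<in>Pp p. (-1)^(sum_elems I) * det_sub M I K * det_sub M (UNIV - I) (UNIV - H))"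
    by (simp add: sum_distrib_left)
  also have "(\<Sum>I\<in>Pp p. (-1)^(sum_elems I) * det_sub M I K * det_sub M (UNIV - I) (UNIV - H))
      = (if K = H then (-1)^(sum_elems K) * det M else 0)"
    using lapU2[of K H M] cH cK by simp
  finally show "wmult p (Zm M p) (ext_pow p M) H K = wid p H K"
    using H K d by (auto simp: wid_def power_add[symmetric] power_mult_distrib[symmetric])
next
  fix H K :: "'n set" assume "H \<notin> Pp p \<or> K \<notin> Pp p"
  then show "Zm M p H K = 0" by (auto simp: Zm_def)
qed

definition lap :: "((complex, 'n::{finite,linorder}) vec, 'n) vec \<Rightarrow> 'n set \<Rightarrow> 'n set \<Rightarrow> 'n set \<Rightarrow> complex" where
  "lap M H P Q = (if P \<inter> Q = {} then (-1)^(s_pos (P \<union> Q) P) * det_sub M H (P \<union> Q) else 0)"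

lemma card_Un_disj: "P \<inter> Q = {} \<Longrightarrow> card (P \<union> (Q::'a::finite set)) = card P + card Q"
  by (simp add: card_Un_disjoint)

lemma LS:
  fixes M :: "((complex, 'n::{finite,linorder}) vec, 'n) vec" and H :: "'n set"
  assumes H: "card H = p + q"
  shows "(\<Sum>I\<in>{I. I \<subseteq> H \<and> card I = p}. (-1)^(s_pos H I) * (\<Sum>P\<in>Pp p. det_sub M I P * \<alpha> P) * (\<Sum>Q\<in>Pp q. det_sub M (H - I) Q * \<beta> Q))
       = (\<Sum>P\<in>Pp p. \<Sum>Q\<in>Pp q. \<alpha> P * \<beta> Q * lap M H P Q)"
proof -
  have fin: "finite {I. I \<subseteq> H \<and> card I = p}" by simp
  have "(\<Sum>I\<in>{I. I \<subseteq> H \<and> card I = p}. (-1)^(s_pos H I) * (\<Sum>P\<in>Pp p. det_sub M I P * \<alpha> P) * (\<Sum>Q\<in>Pp q. det_sub M (H - I) Q * \<beta> Q))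
      = (\<Sum>I\<in>{I. I \<subseteq> H \<and> card I = p}. \<Sum>P\<in>Pp p. \<Sum>Q\<in>Pp q. \<alpha> P * \<beta> Q * ((-1)^(s_pos H I) * det_sub M I P * det_sub M (H - I) Q))"
    by (simp add: sum_distrib_left sum_distrib_right mult_ac)
  also have "\<dots> = (\<Sum>P\<in>Pp p. \<Sum>I\<in>{I. I \<subseteq> H \<and> card I = p}. \<Sum>Q\<in>Pp q. \<alpha> P * \<beta> Q * ((-1)^(s_pos H I) * det_sub M I P * det_sub M (H - I) Q))"
    by (rule sum.swap)
  also have "\<dots> = (\<Sum>P\<in>Pp p. \<Sum>Q\<in>Pp q. \<Sum>I\<in>{I. I \<subseteq> H \<and> card I = p}. \<alpha> P * \<beta> Q * ((-1)^(s_pos H I) * det_sub M I P * det_sub M (H - I) Q))"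
    by (rule sum.cong[OF refl], rule sum.swap)
  also have "\<dots> = (\<Sum>P\<in>Pp p. \<Sum>Q\<in>Pp q. \<alpha> P * \<beta> Q * lap M H P Q)"
  proof (rule sum.cong[OF refl], rule sum.cong[OF refl])
    fix P Q :: "'n set" assume P: "P \<in> Pp p" and Q: "Q \<in> Pp q"
    have cP: "card P = p" and cQ: "card Q = q" using P Q by (auto simp: Pp_def)
    have "(\<Sum>I\<in>{I. I \<subseteq> H \<and> card I = p}. (-1)^(s_pos H I) * det_sub M I P * det_sub M (H - I) Q)
        = (\<Sum>I\<in>{I. I \<subseteq> H \<and> card I = card P}. (-1)^(s_pos H I) * dsub M I P * dsub M (H - I) Q)"
    proof (rule sum.cong)
      show "{I. I \<subseteq> H \<and> card I = p} = {I. I \<subseteq> H \<and> card I = card P}" using cP by simp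
    next
      fix I assume I: "I \<in> {I. I \<subseteq> H \<and> card I = card P}"
      then have cI: "card I = card P" and IH: "I \<subseteq> H" by auto
      have cD: "card (H - I) = card Q" using IH cI cP cQ H by (simp add: card_Diff_subset)
      show "(-1)^(s_pos H I) * det_sub M I P * det_sub M (H - I) Q = (-1)^(s_pos H I) * dsub M I P * dsub M (H - I) Q"
        using det_sub_dsub[OF cI] det_sub_dsub[OF cD] by simp
    qed
    also have "\<dots> = lap M H P Q"
    proof (cases "P \<inter> Q = {}")
      case True
      have "card H = card (P \<union> Q)" using H cP cQ card_Un_disj[OF True] by simp
      then have "det_sub M H (P \<union> Q) = dsub M H (P \<union> Q)" by (rule det_sub_dsub)
      then show ?thesis unfolding laplace lap_def using True by simp
    next
      case False
      then show ?thesis unfolding laplace lap_def by simp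
    qed
    finally show "(\<Sum>I\<in>{I. I \<subseteq> H \<and> card I = p}. \<alpha> P * \<beta> Q * ((-1)^(s_pos H I) * det_sub M I P * det_sub M (H - I) Q))
        = \<alpha> P * \<beta> Q * lap M H P Q"
      by (simp add: sum_distrib_left[symmetric])
  qed
  finally show ?thesis .
qed

lemma RI:
  fixes G :: "'n::finite set \<Rightarrow> 'n set \<Rightarrow> complex"
  shows "(\<Sum>U\<in>Pp (p+q). \<Sum>P\<in>{P. P \<subseteq> U \<and> card P = p}. G U P)
       = (\<Sum>P\<in>Pp p. \<Sum>Q\<in>Pp q. if P \<inter> Q = {} then G (P \<union> Q) P else 0)"
proof -
  have "(\<Sum>U\<in>Pp (p+q). \<Sum>P\<in>{P. P \<subseteq> U \<and> card P = p}. G U P)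
      = (\<Sum>x\<in>Sigma (Pp (p+q)) (\<lambda>U. {P. P \<subseteq> U \<and> card P = p}). G (fst x) (snd x))"
    by (subst sum.Sigma) (simp_all add: case_prod_beta)
  also have "\<dots> = (\<Sum>y\<in>{y\<in>Pp p \<times> Pp q. fst y \<inter> snd y = {}}. G (fst y \<union> snd y) (fst y))"
  proof (rule sum.reindex_bij_witness[where j = "\<lambda>(U,P). (P, U - P)" and i = "\<lambda>(P,Q). (P \<union> Q, P)"])
    fix x :: "'n set \<times> 'n set" assume x: "x \<in> Sigma (Pp (p+q)) (\<lambda>U. {P. P \<subseteq> U \<and> card P = p})"
    obtain U P where xx: "x = (U,P)" by (rule prod.exhaust)
    have U: "card U = p + q" and PU: "P \<subseteq> U" and cP: "card P = p" using x xx by (auto simp: Pp_def)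
    show "(\<lambda>(P,Q). (P \<union> Q, P)) ((\<lambda>(U,P). (P, U - P)) x) = x" using xx PU by auto
    have "card (U - P) = q" using U PU cP by (simp add: card_Diff_subset)
    then show "(\<lambda>(U,P). (P, U - P)) x \<in> {y\<in>Pp p \<times> Pp q. fst y \<inter> snd y = {}}" using xx cP by (auto simp: Pp_def)
    show "G (fst ((\<lambda>(U,P). (P, U - P)) x) \<union> snd ((\<lambda>(U,P). (P, U - P)) x)) (fst ((\<lambda>(U,P). (P, U - P)) x)) = G (fst x) (snd x)"
      using xx PU by (simp add: Un_absorb1 Un_Diff_cancel)
  next
    fix y :: "'n set \<times> 'n set" assume y: "y \<in> {y\<in>Pp p \<times> Pp q. fst y \<inter> snd y = {}}"
    obtain P Q where yy: "y = (P,Q)" by (rule prod.exhaust)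
    have cP: "card P = p" and cQ: "card Q = q" and d: "P \<inter> Q = {}" using y yy by (auto simp: Pp_def)
    show "(\<lambda>(U,P). (P, U - P)) ((\<lambda>(P,Q). (P \<union> Q, P)) y) = y" using yy d by auto
    have "card (P \<union> Q) = p + q" using card_Un_disj[OF d] cP cQ by simp
    then show "(\<lambda>(P,Q). (P \<union> Q, P)) y \<in> Sigma (Pp (p+q)) (\<lambda>U. {P. P \<subseteq> U \<and> card P = p})"
      using yy cP by (auto simp: Pp_def)
  qed
  also have "\<dots> = (\<Sum>y\<in>Pp p \<times> Pp q. if fst y \<inter> snd y = {} then G (fst y \<union> snd y) (fst y) else 0)"
    by (rule sum.inter_filter) simp
  also have "\<dots> = (\<Sum>P\<in>Pp p. \<Sum>Q\<in>Pp q. if P \<inter> Q = {} then G (P \<union> Q) P else 0)"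
    by (simp add: sum.cartesian_product case_prod_beta)
  finally show ?thesis .
qed

definition conj :: "nat \<Rightarrow> ((complex, 'n::{finite,linorder}) vec, 'n) vec \<Rightarrow> 'n wmat \<Rightarrow> 'n wmat" where
  "conj r M X = wmult r (wmult r (ext_pow r M) X) (wtrans (ext_pow r M))"

lemma conj_eq:
  assumes "H \<in> Pp r" "K \<in> Pp r"
  shows "conj r M X H K = (\<Sum>P'\<in>Pp r. \<Sum>P\<in>Pp r. det_sub M H P' * X P' P * det_sub M K P)"
proof -
  have "conj r M X H K = (\<Sum>P\<in>Pp r. (\<Sum>P'\<in>Pp r. det_sub M H P' * X P' P) * det_sub M K P)"
    unfolding conj_def wmult_def wtrans_def
    by (rule sum.cong[OF refl]) (use assms in \<open>auto simp: ext_pow_def intro!: sum.cong\<close>)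
  also have "\<dots> = (\<Sum>P\<in>Pp r. \<Sum>P'\<in>Pp r. det_sub M H P' * X P' P * det_sub M K P)"
    by (simp add: sum_distrib_right)
  also have "\<dots> = (\<Sum>P'\<in>Pp r. \<Sum>P\<in>Pp r. det_sub M H P' * X P' P * det_sub M K P)"
    by (rule sum.swap)
  finally show ?thesis .
qed

lemma conj_out: "\<not> (H \<in> Pp r \<and> K \<in> Pp r) \<Longrightarrow> conj r M X H K = 0"
  unfolding conj_def wmult_def wtrans_def ext_pow_def by auto

lemma IH_Pp: "I \<in> {I. I \<subseteq> H \<and> card I = p} \<Longrightarrow> card H = p + q \<Longrightarrow> I \<in> Pp p \<and> H - I \<in> Pp q"
  by (auto simp: Pp_def card_Diff_subset)

lemma sqcap_conj:
  fixes M :: "((complex, 'n::{finite,linorder}) vec, 'n) vec"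
  shows "sqcap p q (conj p M X) (conj q M Y) = conj (p+q) M (sqcap p q X Y)"
proof (intro ext)
  fix H K :: "'n set"
  show "sqcap p q (conj p M X) (conj q M Y) H K = conj (p+q) M (sqcap p q X Y) H K"
  proof (cases "H \<in> Pp (p+q) \<and> K \<in> Pp (p+q)")
    case False
    then show ?thesis using conj_out[OF False] by (auto simp: sqcap_def)
  next
    case True
    then have H: "H \<in> Pp (p+q)" and K: "K \<in> Pp (p+q)" by auto
    have cH: "card H = p + q" and cK: "card K = p + q" using H K by (auto simp: Pp_def)
    define cc :: complex where "cc = 1 / of_nat ((p+q) choose p)"
    define F4 where "F4 = (\<lambda>P' Q' P Q. lap M H P' Q' * lap M K P Q * X P' P * Y Q' Q)"
    define IH where "IH = {I. I \<subseteq> H \<and> card I = p}"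
    define IK where "IK = {J. J \<subseteq> K \<and> card J = p}"
    have "sqcap p q (conj p M X) (conj q M Y) H K
        = cc * (\<Sum>I\<in>IH. \<Sum>J\<in>IK. (-1)^(s_pos H I + s_pos K J) * conj p M X I J * conj q M Y (H - I) (K - J))"
      using H K unfolding sqcap_def cc_def IH_def IK_def by simp
    also have "(\<Sum>I\<in>IH. \<Sum>J\<in>IK. (-1)^(s_pos H I + s_pos K J) * conj p M X I J * conj q M Y (H - I) (K - J))
        = (\<Sum>J\<in>IK. (-1)^(s_pos K J) * (\<Sum>I\<in>IH. (-1)^(s_pos H I)
             * (\<Sum>P'\<in>Pp p. det_sub M I P' * (\<Sum>P\<in>Pp p. det_sub M J P * X P' P))
             * (\<Sum>Q'\<in>Pp q. det_sub M (H - I) Q' * (\<Sum>Q\<in>Pp q. det_sub M (K - J) Q * Y Q' Q))))"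
    proof -
      have "(\<Sum>I\<in>IH. \<Sum>J\<in>IK. (-1)^(s_pos H I + s_pos K J) * conj p M X I J * conj q M Y (H - I) (K - J))
          = (\<Sum>J\<in>IK. \<Sum>I\<in>IH. (-1)^(s_pos H I + s_pos K J) * conj p M X I J * conj q M Y (H - I) (K - J))"
        by (rule sum.swap)
      also have "\<dots> = (\<Sum>J\<in>IK. (-1)^(s_pos K J) * (\<Sum>I\<in>IH. (-1)^(s_pos H I)
             * (\<Sum>P'\<in>Pp p. det_sub M I P' * (\<Sum>P\<in>Pp p. det_sub M J P * X P' P))
             * (\<Sum>Q'\<in>Pp q. det_sub M (H - I) Q' * (\<Sum>Q\<in>Pp q. det_sub M (K - J) Q * Y Q' Q))))"
      proof (rule sum.cong[OF refl])
        fix J assume J: "J \<in> IK"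
        have JJ: "J \<in> Pp p" "K - J \<in> Pp q" using IH_Pp[OF J[unfolded IK_def] cK] by auto
        have "(\<Sum>I\<in>IH. (-1)^(s_pos H I + s_pos K J) * conj p M X I J * conj q M Y (H - I) (K - J))
           = (\<Sum>I\<in>IH. (-1)^(s_pos K J) * ((-1)^(s_pos H I)
             * (\<Sum>P'\<in>Pp p. det_sub M I P' * (\<Sum>P\<in>Pp p. det_sub M J P * X P' P))
             * (\<Sum>Q'\<in>Pp q. det_sub M (H - I) Q' * (\<Sum>Q\<in>Pp q. det_sub M (K - J) Q * Y Q' Q))))"
        proof (rule sum.cong[OF refl])
          fix I assume I: "I \<in> IH"
          have II: "I \<in> Pp p" "H - I \<in> Pp q" using IH_Pp[OF I[unfolded IH_def] cH] by auto
          have cx: "conj p M X I J = (\<Sum>P'\<in>Pp p. det_sub M I P' * (\<Sum>P\<in>Pp p. det_sub M J P * X P' P))"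
            unfolding conj_eq[OF II(1) JJ(1)] by (simp add: sum_distrib_left mult_ac)
          have cy: "conj q M Y (H - I) (K - J) = (\<Sum>Q'\<in>Pp q. det_sub M (H - I) Q' * (\<Sum>Q\<in>Pp q. det_sub M (K - J) Q * Y Q' Q))"
            unfolding conj_eq[OF II(2) JJ(2)] by (simp add: sum_distrib_left mult_ac)
          show "(-1)^(s_pos H I + s_pos K J) * conj p M X I J * conj q M Y (H - I) (K - J)
             = (-1)^(s_pos K J) * ((-1)^(s_pos H I)
             * (\<Sum>P'\<in>Pp p. det_sub M I P' * (\<Sum>P\<in>Pp p. det_sub M J P * X P' P))
             * (\<Sum>Q'\<in>Pp q. det_sub M (H - I) Q' * (\<Sum>Q\<in>Pp q. det_sub M (K - J) Q * Y Q' Q)))"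
            unfolding cx cy by (simp add: power_add mult_ac)
        qed
        also have "\<dots> = (-1)^(s_pos K J) * (\<Sum>I\<in>IH. (-1)^(s_pos H I)
             * (\<Sum>P'\<in>Pp p. det_sub M I P' * (\<Sum>P\<in>Pp p. det_sub M J P * X P' P))
             * (\<Sum>Q'\<in>Pp q. det_sub M (H - I) Q' * (\<Sum>Q\<in>Pp q. det_sub M (K - J) Q * Y Q' Q)))"
          by (simp add: sum_distrib_left)
        finally show "(\<Sum>I\<in>IH. (-1)^(s_pos H I + s_pos K J) * conj p M X I J * conj q M Y (H - I) (K - J))
           = (-1)^(s_pos K J) * (\<Sum>I\<in>IH. (-1)^(s_pos H I)
             * (\<Sum>P'\<in>Pp p. det_sub M I P' * (\<Sum>P\<in>Pp p. det_sub M J P * X P' P))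
             * (\<Sum>Q'\<in>Pp q. det_sub M (H - I) Q' * (\<Sum>Q\<in>Pp q. det_sub M (K - J) Q * Y Q' Q)))" .
      qed
      finally show ?thesis .
    qed
    also have "\<dots> = (\<Sum>J\<in>IK. (-1)^(s_pos K J) * (\<Sum>P'\<in>Pp p. \<Sum>Q'\<in>Pp q.
          (\<Sum>P\<in>Pp p. det_sub M J P * X P' P) * (\<Sum>Q\<in>Pp q. det_sub M (K - J) Q * Y Q' Q) * lap M H P' Q'))"
      unfolding IH_def using LS[OF cH] by simp
    also have "\<dots> = (\<Sum>P'\<in>Pp p. \<Sum>Q'\<in>Pp q. lap M H P' Q' * (\<Sum>J\<in>IK. (-1)^(s_pos K J) *
          (\<Sum>P\<in>Pp p. det_sub M J P * X P' P) * (\<Sum>Q\<in>Pp q. det_sub M (K - J) Q * Y Q' Q)))"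
    proof -
      define AX where "AX = (\<lambda>J P'. \<Sum>P\<in>Pp p. det_sub M J P * X P' P)"
      define BY where "BY = (\<lambda>J Q'. \<Sum>Q\<in>Pp q. det_sub M (K - J) Q * Y Q' Q)"
      have "(\<Sum>J\<in>IK. (-1)^(s_pos K J) * (\<Sum>P'\<in>Pp p. \<Sum>Q'\<in>Pp q. AX J P' * BY J Q' * lap M H P' Q'))
        = (\<Sum>J\<in>IK. \<Sum>P'\<in>Pp p. \<Sum>Q'\<in>Pp q. lap M H P' Q' * ((-1)^(s_pos K J) * AX J P' * BY J Q'))"
        by (simp add: sum_distrib_left mult_ac)
      then have "(\<Sum>J\<in>IK. (-1)^(s_pos K J) * (\<Sum>P'\<in>Pp p. \<Sum>Q'\<in>Pp q.
          (\<Sum>P\<in>Pp p. det_sub M J P * X P' P) * (\<Sum>Q\<in>Pp q. det_sub M (K - J) Q * Y Q' Q) * lap M H P' Q'))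
        = (\<Sum>J\<in>IK. \<Sum>P'\<in>Pp p. \<Sum>Q'\<in>Pp q. lap M H P' Q' * ((-1)^(s_pos K J) *
          (\<Sum>P\<in>Pp p. det_sub M J P * X P' P) * (\<Sum>Q\<in>Pp q. det_sub M (K - J) Q * Y Q' Q)))"
        unfolding AX_def BY_def .
      also have "\<dots> = (\<Sum>P'\<in>Pp p. \<Sum>J\<in>IK. \<Sum>Q'\<in>Pp q. lap M H P' Q' * ((-1)^(s_pos K J) *
          (\<Sum>P\<in>Pp p. det_sub M J P * X P' P) * (\<Sum>Q\<in>Pp q. det_sub M (K - J) Q * Y Q' Q)))"
        by (rule sum.swap)
      also have "\<dots> = (\<Sum>P'\<in>Pp p. \<Sum>Q'\<in>Pp q. \<Sum>J\<in>IK. lap M H P' Q' * ((-1)^(s_pos K J) *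
          (\<Sum>P\<in>Pp p. det_sub M J P * X P' P) * (\<Sum>Q\<in>Pp q. det_sub M (K - J) Q * Y Q' Q)))"
        by (rule sum.cong[OF refl], rule sum.swap)
      finally show ?thesis by (simp add: sum_distrib_left)
    qed
    also have "\<dots> = (\<Sum>P'\<in>Pp p. \<Sum>Q'\<in>Pp q. \<Sum>P\<in>Pp p. \<Sum>Q\<in>Pp q. F4 P' Q' P Q)"
    proof (rule sum.cong[OF refl], rule sum.cong[OF refl])
      fix P' Q' :: "'n set"
      have "(\<Sum>J\<in>IK. (-1)^(s_pos K J) * (\<Sum>P\<in>Pp p. det_sub M J P * X P' P) * (\<Sum>Q\<in>Pp q. det_sub M (K - J) Q * Y Q' Q))
          = (\<Sum>P\<in>Pp p. \<Sum>Q\<in>Pp q. X P' P * Y Q' Q * lap M K P Q)"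
        unfolding IK_def by (rule LS[OF cK])
      then show "lap M H P' Q' * (\<Sum>J\<in>IK. (-1)^(s_pos K J) * (\<Sum>P\<in>Pp p. det_sub M J P * X P' P) * (\<Sum>Q\<in>Pp q. det_sub M (K - J) Q * Y Q' Q))
          = (\<Sum>P\<in>Pp p. \<Sum>Q\<in>Pp q. F4 P' Q' P Q)"
        unfolding F4_def by (simp add: sum_distrib_left mult_ac)
    qed
    finally have LHS: "sqcap p q (conj p M X) (conj q M Y) H K = cc * (\<Sum>P'\<in>Pp p. \<Sum>Q'\<in>Pp q. \<Sum>P\<in>Pp p. \<Sum>Q\<in>Pp q. F4 P' Q' P Q)" .
    define T where "T = (\<lambda>U P' V P. ((-1)^(s_pos U P') * det_sub M H U) * ((-1)^(s_pos V P) * det_sub M K V)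
                              * X P' P * Y (U - P') (V - P))"
    have "conj (p+q) M (sqcap p q X Y) H K
        = (\<Sum>U\<in>Pp (p+q). \<Sum>V\<in>Pp (p+q). det_sub M H U * sqcap p q X Y U V * det_sub M K V)"
      by (rule conj_eq[OF H K])
    also have "\<dots> = cc * (\<Sum>U\<in>Pp (p+q). \<Sum>V\<in>Pp (p+q). \<Sum>P'\<in>{P. P \<subseteq> U \<and> card P = p}. \<Sum>P\<in>{P. P \<subseteq> V \<and> card P = p}. T U P' V P)"
    proof -
      have "(\<Sum>U\<in>Pp (p+q). \<Sum>V\<in>Pp (p+q). det_sub M H U * sqcap p q X Y U V * det_sub M K V)
        = (\<Sum>U\<in>Pp (p+q). \<Sum>V\<in>Pp (p+q). cc * (\<Sum>P'\<in>{P. P \<subseteq> U \<and> card P = p}. \<Sum>P\<in>{P. P \<subseteq> V \<and> card P = p}. T U P' V P))"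
      proof (rule sum.cong[OF refl], rule sum.cong[OF refl])
        fix U V :: "'n set" assume U: "U \<in> Pp (p+q)" and V: "V \<in> Pp (p+q)"
        show "det_sub M H U * sqcap p q X Y U V * det_sub M K V
          = cc * (\<Sum>P'\<in>{P. P \<subseteq> U \<and> card P = p}. \<Sum>P\<in>{P. P \<subseteq> V \<and> card P = p}. T U P' V P)"
          unfolding sqcap_def T_def cc_def using U V
          by (simp add: sum_distrib_left sum_distrib_right power_add mult_ac)
      qed
      then show ?thesis by (simp add: sum_distrib_left)
    qed
    also have "(\<Sum>U\<in>Pp (p+q). \<Sum>V\<in>Pp (p+q). \<Sum>P'\<in>{P. P \<subseteq> U \<and> card P = p}. \<Sum>P\<in>{P. P \<subseteq> V \<and> card P = p}. T U P' V P)
        = (\<Sum>U\<in>Pp (p+q). \<Sum>P'\<in>{P. P \<subseteq> U \<and> card P = p}. \<Sum>V\<in>Pp (p+q). \<Sum>P\<in>{P. P \<subseteq> V \<and> card P = p}. T U P' V P)"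
      by (rule sum.cong[OF refl], rule sum.swap)
    also have "\<dots> = (\<Sum>U\<in>Pp (p+q). \<Sum>P'\<in>{P. P \<subseteq> U \<and> card P = p}. \<Sum>P\<in>Pp p. \<Sum>Q\<in>Pp q.
                       if P \<inter> Q = {} then T U P' (P \<union> Q) P else 0)"
      by (rule sum.cong[OF refl], rule sum.cong[OF refl], rule RI)
    also have "\<dots> = (\<Sum>P'\<in>Pp p. \<Sum>Q'\<in>Pp q. if P' \<inter> Q' = {} then (\<Sum>P\<in>Pp p. \<Sum>Q\<in>Pp q.
                       if P \<inter> Q = {} then T (P' \<union> Q') P' (P \<union> Q) P else 0) else 0)"
      by (rule RI)
    also have "\<dots> = (\<Sum>P'\<in>Pp p. \<Sum>Q'\<in>Pp q. \<Sum>P\<in>Pp p. \<Sum>Q\<in>Pp q. F4 P' Q' P Q)"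
    proof (rule sum.cong[OF refl], rule sum.cong[OF refl])
      fix P' Q' :: "'n set"
      show "(if P' \<inter> Q' = {} then (\<Sum>P\<in>Pp p. \<Sum>Q\<in>Pp q. if P \<inter> Q = {} then T (P' \<union> Q') P' (P \<union> Q) P else 0) else 0)
         = (\<Sum>P\<in>Pp p. \<Sum>Q\<in>Pp q. F4 P' Q' P Q)"
      proof (cases "P' \<inter> Q' = {}")
        case False
        then show ?thesis by (simp add: F4_def lap_def)
      next
        case True
        have UQ: "(P' \<union> Q') - P' = Q'" using True by auto
        have "(\<Sum>P\<in>Pp p. \<Sum>Q\<in>Pp q. if P \<inter> Q = {} then T (P' \<union> Q') P' (P \<union> Q) P else 0)
            = (\<Sum>P\<in>Pp p. \<Sum>Q\<in>Pp q. F4 P' Q' P Q)"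
        proof (rule sum.cong[OF refl], rule sum.cong[OF refl])
          fix P Q :: "'n set"
          show "(if P \<inter> Q = {} then T (P' \<union> Q') P' (P \<union> Q) P else 0) = F4 P' Q' P Q"
          proof (cases "P \<inter> Q = {}")
            case False
            then show ?thesis by (simp add: F4_def lap_def)
          next
            case True2: True
            have VQ: "(P \<union> Q) - P = Q" using True2 by auto
            show ?thesis using True True2 unfolding T_def F4_def lap_def UQ VQ by (simp add: mult_ac)
          qed
        qed
        then show ?thesis using True by simp
      qed
    qed
    finally have RHS: "conj (p+q) M (sqcap p q X Y) H K = cc * (\<Sum>P'\<in>Pp p. \<Sum>Q'\<in>Pp q. \<Sum>P\<in>Pp p. \<Sum>Q\<in>Pp q. F4 P' Q' P Q)" .
    show ?thesis using LHS RHS by simp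
  qed
qed

lemma Pp1_bij: "bij_betw (\<lambda>l. {l}) (UNIV :: 'n::finite set) (Pp 1)"
proof (rule bij_betwI')
  show "\<And>x y. ({x} = {y}) = (x = y)" by simp
  show "\<And>x. {x} \<in> Pp 1" by (simp add: Pp_def)
  show "\<And>y. y \<in> Pp 1 \<Longrightarrow> \<exists>x\<in>UNIV. y = {x}" by (auto simp: Pp_def card_1_singleton_iff)
qed

lemma lift1_conj:
  fixes M B :: "((complex, 'n::{finite,linorder}) vec, 'n) vec"
  shows "lift1 (cscale c (M ** B ** transpose M)) = (\<lambda>H K. c * conj 1 M (lift1 B) H K)"
proof (intro ext)
  fix H K :: "'n set"
  show "lift1 (cscale c (M ** B ** transpose M)) H K = c * conj 1 M (lift1 B) H K"
  proof (cases "H \<in> Pp 1 \<and> K \<in> Pp 1")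
    case False
    then show ?thesis using conj_out[OF False] by (auto simp: lift1_def ext_pow_def)
  next
    case True
    then obtain h k where hk: "H = {h}" "K = {k}" by (auto simp: Pp_def card_1_singleton_iff)
    have "conj 1 M (lift1 B) H K = (\<Sum>P'\<in>Pp 1. \<Sum>P\<in>Pp 1. det_sub M H P' * lift1 B P' P * det_sub M K P)"
      using True by (simp add: conj_eq)
    also have "\<dots> = (\<Sum>l\<in>UNIV. (\<lambda>P'. \<Sum>P\<in>Pp 1. det_sub M H P' * lift1 B P' P * det_sub M K P) {l})"
      by (rule sum.reindex_bij_betw[OF Pp1_bij, symmetric])
    also have "\<dots> = (\<Sum>l\<in>UNIV. \<Sum>l'\<in>UNIV. M$h$l * B$l$l' * M$k$l')"
    proof (rule sum.cong[OF refl])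
      fix l :: 'n
      have "(\<Sum>P\<in>Pp 1. det_sub M H {l} * lift1 B {l} P * det_sub M K P)
          = (\<Sum>l'\<in>UNIV. (\<lambda>P. det_sub M H {l} * lift1 B {l} P * det_sub M K P) {l'})"
        by (rule sum.reindex_bij_betw[OF Pp1_bij, symmetric])
      also have "\<dots> = (\<Sum>l'\<in>UNIV. M$h$l * B$l$l' * M$k$l')"
        by (simp add: hk det_sub_single lift1_def ext_pow_def Pp_def)
      finally show "(\<lambda>P'. \<Sum>P\<in>Pp 1. det_sub M H P' * lift1 B P' P * det_sub M K P) {l} = (\<Sum>l'\<in>UNIV. M$h$l * B$l$l' * M$k$l')" by simp
    qed
    finally have cj: "conj 1 M (lift1 B) H K = (\<Sum>l\<in>UNIV. \<Sum>l'\<in>UNIV. M$h$l * B$l$l' * M$k$l')" .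
    have "lift1 (cscale c (M ** B ** transpose M)) H K = c * (M ** B ** transpose M)$h$k"
      using True by (simp add: hk lift1_def ext_pow_def det_sub_single cscale_def)
    also have "(M ** B ** transpose M)$h$k = (\<Sum>l'\<in>UNIV. (\<Sum>l\<in>UNIV. M$h$l * B$l$l') * M$k$l')"
      by (simp add: matrix_matrix_mult_def transpose_def)
    also have "\<dots> = (\<Sum>l\<in>UNIV. \<Sum>l'\<in>UNIV. M$h$l * B$l$l' * M$k$l')"
      by (simp add: sum_distrib_right) (rule sum.swap)
    finally show ?thesis using cj by simp
  qed
qed

lemma sqcap_scale: "sqcap p q (\<lambda>H K. a * X H K) (\<lambda>H K. b * Y H K) = (\<lambda>H K. a * b * sqcap p q X Y H K)"
  by (intro ext) (simp add: sqcap_def sum_distrib_left mult_ac)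

lemma sqcap_prod_conj:
  fixes M :: "((complex, 'n::{finite,linorder}) vec, 'n) vec"
  assumes A': "\<And>i. 1 \<le> i \<Longrightarrow> i \<le> k \<Longrightarrow> A' i = cscale c (M ** A i ** transpose M)"
  shows "Suc n \<le> k \<Longrightarrow> sqcap_prod A' (Suc n) = (\<lambda>H K. c^(Suc n) * conj (Suc n) M (sqcap_prod A (Suc n)) H K)"
proof (induction n)
  case 0
  then show ?case using A'[of 1] by (simp add: lift1_conj)
next
  case (Suc n)
  then have IH: "sqcap_prod A' (Suc n) = (\<lambda>H K. c^(Suc n) * conj (Suc n) M (sqcap_prod A (Suc n)) H K)" by simp
  have a: "A' (Suc (Suc n)) = cscale c (M ** A (Suc (Suc n)) ** transpose M)" using A' Suc.prems by simp
  have "sqcap_prod A' (Suc (Suc n)) = sqcap (Suc n) 1 (sqcap_prod A' (Suc n)) (lift1 (A' (Suc (Suc n))))" by simp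
  also have "\<dots> = sqcap (Suc n) 1 (\<lambda>H K. c^(Suc n) * conj (Suc n) M (sqcap_prod A (Suc n)) H K)
                     (\<lambda>H K. c * conj 1 M (lift1 (A (Suc (Suc n)))) H K)"
    unfolding IH a lift1_conj ..
  also have "\<dots> = (\<lambda>H K. c^(Suc n) * c * sqcap (Suc n) 1 (conj (Suc n) M (sqcap_prod A (Suc n))) (conj 1 M (lift1 (A (Suc (Suc n))))) H K)"
    by (rule sqcap_scale)
  also have "\<dots> = (\<lambda>H K. c^(Suc (Suc n)) * conj (Suc (Suc n)) M (sqcap_prod A (Suc (Suc n))) H K)"
    unfolding sqcap_conj by (simp add: mult.commute)
  finally show ?case .
qed

lemma compl_bij: "card (UNIV::'n::finite set) = p + k \<Longrightarrow> bij_betw (\<lambda>R. UNIV - R) (Pp p :: 'n set set) (Pp k)"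
proof (rule bij_betwI[where g = "\<lambda>R. UNIV - R"])
  assume c: "card (UNIV::'n set) = p + k"
  show "(\<lambda>R. UNIV - R) \<in> (Pp p :: 'n set set) \<rightarrow> Pp k" using c by (auto simp: Pp_def card_compl)
  show "(\<lambda>R. UNIV - R) \<in> (Pp k :: 'n set set) \<rightarrow> Pp p" using c by (auto simp: Pp_def card_compl)
qed auto

definition sp :: "complex^'n::finite \<Rightarrow> complex^'n \<Rightarrow> complex" where
  "sp u v = (\<Sum>i\<in>UNIV. cnj (u$i) * v$i)"

lemma sp_add_left: "sp (u + w) v = sp u v + sp w v"
  by (simp add: sp_def sum.distrib distrib_right)
lemma sp_add_right: "sp u (v + w) = sp u v + sp u w"
  by (simp add: sp_def sum.distrib distrib_left)
lemma sp_diff_right: "sp u (v - w) = sp u v - sp u w"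
  by (simp add: sp_def sum_subtractf right_diff_distrib)
lemma sp_zero_right: "sp u 0 = 0" by (simp add: sp_def)
lemma sp_zero_left: "sp 0 u = 0" by (simp add: sp_def)

lemma cmat_real: "cnj (cmat X $ i $ j) = cmat X $ i $ j"
  by (simp add: cmat_def)

lemma sp_cmat_left: "sp (cmat P *v a) v = sp a (transpose (cmat P) *v v)"
proof -
  have "sp (cmat P *v a) v = (\<Sum>i\<in>UNIV. \<Sum>j\<in>UNIV. cnj (a$j) * cmat P $ i $ j * v$i)"
    unfolding sp_def matrix_vector_mult_def
    by (simp add: cmat_real sum_distrib_left sum_distrib_right mult_ac)
  also have "\<dots> = (\<Sum>j\<in>UNIV. \<Sum>i\<in>UNIV. cnj (a$j) * cmat P $ i $ j * v$i)" by (rule sum.swap)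
  also have "\<dots> = sp a (transpose (cmat P) *v v)"
    unfolding sp_def matrix_vector_mult_def transpose_def by (simp add: sum_distrib_left mult_ac)
  finally show ?thesis .
qed

lemma cmat_mult: "cmat (X ** Y) = cmat X ** cmat Y"
  by (simp add: cmat_def matrix_matrix_mult_def vec_eq_iff)
lemma cmat_transpose: "cmat (transpose X) = transpose (cmat X)"
  by (simp add: cmat_def transpose_def vec_eq_iff)
lemma cmat_diff: "cmat (X - Y) = cmat X - cmat Y"
  by (simp add: cmat_def vec_eq_iff)
lemma cmat_zero: "cmat 0 = 0"
  by (simp add: cmat_def vec_eq_iff)
lemma cmat_one: "cmat (mat 1) = mat 1"
  by (simp add: cmat_def vec_eq_iff mat_def)
lemma cmat_uminus: "cmat (- X) = - cmat X"
  by (simp add: cmat_def vec_eq_iff)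

lemma symp_identity:
  assumes g: "(A,B,C,D) \<in> Sp"
  shows "sp (cmat A *v x + cmat B *v y) (cmat C *v x + cmat D *v y) - sp (cmat C *v x + cmat D *v y) (cmat A *v x + cmat B *v y)
       = sp x y - sp y x"
proof -
  define TAC where "TAC = transpose (cmat A) ** cmat C"
  define TCA where "TCA = transpose (cmat C) ** cmat A"
  define TAD where "TAD = transpose (cmat A) ** cmat D"
  define TCB where "TCB = transpose (cmat C) ** cmat B"
  define TBC where "TBC = transpose (cmat B) ** cmat C"
  define TDA where "TDA = transpose (cmat D) ** cmat A"
  define TBD where "TBD = transpose (cmat B) ** cmat D"
  define TDB where "TDB = transpose (cmat D) ** cmat B"
  have i1: "transpose A ** C - transpose C ** A = 0" and i2: "transpose A ** D - transpose C ** B = mat 1"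
    and i3: "transpose B ** C - transpose D ** A = - mat 1" and i4: "transpose B ** D - transpose D ** B = 0"
    using g unfolding Sp_def by simp_all
  have c1: "TAC - TCA = 0" using arg_cong[OF i1, of cmat]
    unfolding TAC_def TCA_def by (simp only: cmat_diff cmat_mult cmat_transpose cmat_zero)
  have c2: "TAD - TCB = mat 1" using arg_cong[OF i2, of cmat]
    unfolding TAD_def TCB_def by (simp only: cmat_diff cmat_mult cmat_transpose cmat_one)
  have c3: "TBC - TDA = - mat 1" using arg_cong[OF i3, of cmat]
    unfolding TBC_def TDA_def by (simp only: cmat_diff cmat_mult cmat_transpose cmat_one cmat_uminus)
  have c4: "TBD - TDB = 0" using arg_cong[OF i4, of cmat]
    unfolding TBD_def TDB_def by (simp only: cmat_diff cmat_mult cmat_transpose cmat_zero)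
  have e1: "TAC = TCA" using c1 by simp
  have e4: "TBD = TDB" using c4 by simp
  have e2: "TAD *v y = TCB *v y + y"
  proof -
    have "TAD = TCB + mat 1" using c2 by (simp add: algebra_simps)
    then show ?thesis by (simp add: matrix_vector_mult_add_rdistrib)
  qed
  have e3: "TBC *v x = TDA *v x - x"
  proof -
    have "TBC = TDA - mat 1" using c3 by (simp add: algebra_simps)
    then show ?thesis by (simp add: matrix_vector_mult_diff_rdistrib)
  qed
  have L: "sp (cmat A *v x + cmat B *v y) (cmat C *v x + cmat D *v y)
     = sp x (TAC *v x) + sp x (TAD *v y) + sp y (TBC *v x) + sp y (TBD *v y)"
    unfolding TAC_def TAD_def TBC_def TBD_def
    by (simp add: sp_add_left sp_add_right sp_cmat_left matrix_vector_right_distrib matrix_vector_mul_assoc)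
  have R: "sp (cmat C *v x + cmat D *v y) (cmat A *v x + cmat B *v y)
     = sp x (TCA *v x) + sp x (TCB *v y) + sp y (TDA *v x) + sp y (TDB *v y)"
    unfolding TCA_def TCB_def TDA_def TDB_def
    by (simp add: sp_add_left sp_add_right sp_cmat_left matrix_vector_right_distrib matrix_vector_mul_assoc)
  show ?thesis unfolding L R e1 e4 e2 e3 by (simp add: sp_add_right sp_diff_right)
qed

lemma sp_swap: "sp u v = cnj (sp v u)"
  by (simp add: sp_def mult.commute)

lemma det_aut_nz:
  assumes g: "\<gamma> \<in> Sp" and t: "\<tau> \<in> siegel"
  shows "det (aut_factor \<gamma> \<tau>) \<noteq> 0"
proof -
  obtain A B C D where gg: "\<gamma> = (A,B,C,D)" by (rule prod_cases4)
  have gS: "(A,B,C,D) \<in> Sp" using g gg by simp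
  define M where "M = cmat C ** \<tau> + cmat D"
  have ker: "v = 0" if Mv: "M *v v = 0" for v
  proof -
    define x where "x = \<tau> *v v"
    have q0: "cmat C *v x + cmat D *v v = 0"
      using Mv unfolding M_def x_def by (simp add: matrix_vector_mul_assoc matrix_vector_mult_add_rdistrib)
    have "sp x v - sp v x = 0"
      using symp_identity[OF gS, of x v] q0 by (simp add: sp_zero_right sp_zero_left)
    then have eq: "sp v x = cnj (sp v x)" using sp_swap[of x v] by simp
    have h1: "Im (sp v x) = Im (cnj (sp v x))" by (rule arg_cong[OF eq])
    have h2: "Im (cnj (sp v x)) = - Im (sp v x)" by simp
    have imz: "Im (sp v x) = 0" using h1 h2 by linarith
    have tt: "transpose \<tau> = \<tau>" using t unfolding siegel_def by simp
    have sym: "\<tau>$i$j = \<tau>$j$i" for i j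
    proof -
      have "transpose \<tau> $ i $ j = \<tau> $ i $ j" using tt by simp
      then show ?thesis by (simp add: transpose_def)
    qed
    define a where "a = (\<chi> i. Re (v$i))"
    define b where "b = (\<chi> i. Im (v$i))"
    define Y where "Y = cim \<tau>"
    have pos: "z \<noteq> 0 \<Longrightarrow> z \<bullet> (Y *v z) > 0" for z using t unfolding siegel_def Y_def by simp
    have "Im (sp v x) = (\<Sum>i\<in>UNIV. \<Sum>j\<in>UNIV. Im (cnj (v$i) * \<tau>$i$j * v$j))"
      unfolding sp_def x_def matrix_vector_mult_def by (simp add: Im_sum sum_distrib_left mult_ac)
    also have "\<dots> = (\<Sum>i\<in>UNIV. \<Sum>j\<in>UNIV. Im (\<tau>$i$j) * (a$i * a$j + b$i * b$j))
                  + (\<Sum>i\<in>UNIV. \<Sum>j\<in>UNIV. Re (\<tau>$i$j) * (a$i * b$j)) - (\<Sum>i\<in>UNIV. \<Sum>j\<in>UNIV. Re (\<tau>$i$j) * (b$i * a$j))"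
      unfolding a_def b_def by (simp add: sum.distrib sum_subtractf algebra_simps)
    also have "(\<Sum>i\<in>UNIV. \<Sum>j\<in>UNIV. Re (\<tau>$i$j) * (b$i * a$j)) = (\<Sum>i\<in>UNIV. \<Sum>j\<in>UNIV. Re (\<tau>$i$j) * (a$i * b$j))"
    proof -
      have "(\<Sum>i\<in>UNIV. \<Sum>j\<in>UNIV. Re (\<tau>$i$j) * (b$i * a$j)) = (\<Sum>j\<in>UNIV. \<Sum>i\<in>UNIV. Re (\<tau>$i$j) * (b$i * a$j))"
        by (rule sum.swap)
      also have "\<dots> = (\<Sum>j\<in>UNIV. \<Sum>i\<in>UNIV. Re (\<tau>$j$i) * (a$j * b$i))" by (simp add: sym mult_ac)
      finally show ?thesis .
    qed
    also have "(\<Sum>i\<in>UNIV. \<Sum>j\<in>UNIV. Im (\<tau>$i$j) * (a$i * a$j + b$i * b$j)) = a \<bullet> (Y *v a) + b \<bullet> (Y *v b)"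
      unfolding Y_def cim_def inner_vec_def matrix_vector_mult_def
      by (simp add: sum.distrib sum_distrib_left algebra_simps)
    finally have z: "a \<bullet> (Y *v a) + b \<bullet> (Y *v b) = 0" using imz by simp
    have nn: "z \<bullet> (Y *v z) \<ge> 0" for z using pos[of z] by (cases "z = 0") auto
    have "a = 0"
    proof (rule ccontr)
      assume "a \<noteq> 0" then have "a \<bullet> (Y *v a) > 0" by (rule pos)
      then show False using z nn[of b] by linarith
    qed
    moreover have "b = 0"
    proof (rule ccontr)
      assume "b \<noteq> 0" then have "b \<bullet> (Y *v b) > 0" by (rule pos)
      then show False using z nn[of a] by linarith
    qed
    ultimately show "v = 0" unfolding a_def b_def by (simp add: vec_eq_iff complex_eq_iff)
  qed
  have "\<exists>B'. B' ** M = mat 1" unfolding matrix_left_invertible_ker using ker by blast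
  then have "invertible M" using invertible_left_inverse by blast
  then have "det M \<noteq> 0" by (simp add: invertible_det_nz)
  then show ?thesis unfolding aut_factor_def gg M_def by simp
qed

lemma sign3: "(-1::complex)^(r+h) * (-1)^(r+s) * (-1)^(s+k) = (-1)^(h+k)"
proof -
  have "(-1::complex)^(r+h) * (-1)^(r+s) * (-1)^(s+k) = (-1)^(r+h+(r+s)+(s+k))" by (simp add: power_add)
  also have "r+h+(r+s)+(s+k) = (h+k) + 2*(r+s)" by simp
  finally show ?thesis by (simp only: neg1_pow_add2)
qed

lemma main_identity:
  fixes M :: "((complex, 'n::{finite,linorder}) vec, 'n) vec" and S :: "'n wmat"
  assumes d: "det M \<noteq> 0" and cc: "CARD('n) = p + k"
    and H: "H \<in> Pp p" and K: "K \<in> Pp p"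
  defines "F \<equiv> (\<lambda>I J. if I \<in> Pp p \<and> J \<in> Pp p then (-1)^(sum_elems I + sum_elems J) * S (UNIV - I) (UNIV - J) else 0)"
  shows "(-1)^(sum_elems H + sum_elems K) * (det M^k * conj k M S (UNIV - H) (UNIV - K))
       = det M ^ (k + 2) * wmult p (wmult p (wtrans (Zm M p)) F) (Zm M p) H K"
proof -
  define c where "c = det M"
  define T where "T = (\<lambda>R S2. det_sub M (UNIV - H) (UNIV - R) * S (UNIV - R) (UNIV - S2) * det_sub M (UNIV - K) (UNIV - S2))"
  have cb: "bij_betw (\<lambda>R. UNIV - R) (Pp p :: 'n set set) (Pp k)" by (rule compl_bij) (simp add: cc)
  have Hk: "UNIV - H \<in> Pp k" and Kk: "UNIV - K \<in> Pp k" using bij_betwE[OF cb] H K by auto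
  have "wmult p (wmult p (wtrans (Zm M p)) F) (Zm M p) H K
      = (\<Sum>S2\<in>Pp p. \<Sum>R\<in>Pp p. Zm M p R H * F R S2 * Zm M p S2 K)"
    unfolding wmult_def wtrans_def by (simp add: sum_distrib_right)
  also have "\<dots> = (\<Sum>S2\<in>Pp p. \<Sum>R\<in>Pp p. ((-1)^(sum_elems H + sum_elems K) / c^2) * T R S2)"
  proof (rule sum.cong[OF refl], rule sum.cong[OF refl])
    fix S2 R :: "'n set" assume S2: "S2 \<in> Pp p" and R: "R \<in> Pp p"
    have "Zm M p R H * F R S2 * Zm M p S2 K
        = ((-1)^(sum_elems R + sum_elems H) * (-1)^(sum_elems R + sum_elems S2) * (-1)^(sum_elems S2 + sum_elems K)) / c^2 * T R S2"
      using H K R S2 unfolding Zm_def F_def T_def c_def by (simp add: power2_eq_square field_simps)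
    also have "\<dots> = ((-1)^(sum_elems H + sum_elems K) / c^2) * T R S2" by (simp only: sign3)
    finally show "Zm M p R H * F R S2 * Zm M p S2 K = ((-1)^(sum_elems H + sum_elems K) / c^2) * T R S2" .
  qed
  also have "\<dots> = ((-1)^(sum_elems H + sum_elems K) / c^2) * (\<Sum>S2\<in>Pp p. \<Sum>R\<in>Pp p. T R S2)"
    by (simp add: sum_distrib_left)
  finally have R1: "wmult p (wmult p (wtrans (Zm M p)) F) (Zm M p) H K
      = ((-1)^(sum_elems H + sum_elems K) / c^2) * (\<Sum>S2\<in>Pp p. \<Sum>R\<in>Pp p. T R S2)" .
  have "(\<Sum>S2\<in>Pp p. \<Sum>R\<in>Pp p. T R S2) = (\<Sum>R\<in>Pp p. \<Sum>S2\<in>Pp p. T R S2)" by (rule sum.swap)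
  also have "\<dots> = (\<Sum>R\<in>Pp p. \<Sum>P\<in>Pp k. det_sub M (UNIV - H) (UNIV - R) * S (UNIV - R) P * det_sub M (UNIV - K) P)"
  proof (rule sum.cong[OF refl])
    fix R :: "'n set"
    show "(\<Sum>S2\<in>Pp p. T R S2) = (\<Sum>P\<in>Pp k. det_sub M (UNIV - H) (UNIV - R) * S (UNIV - R) P * det_sub M (UNIV - K) P)"
      unfolding T_def by (rule sum.reindex_bij_betw[OF cb])
  qed
  also have "\<dots> = (\<Sum>P'\<in>Pp k. \<Sum>P\<in>Pp k. det_sub M (UNIV - H) P' * S P' P * det_sub M (UNIV - K) P)"
    by (rule sum.reindex_bij_betw[OF cb, where g = "\<lambda>P'. \<Sum>P\<in>Pp k. det_sub M (UNIV - H) P' * S P' P * det_sub M (UNIV - K) P"])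
  also have "\<dots> = conj k M S (UNIV - H) (UNIV - K)" by (rule conj_eq[OF Hk Kk, symmetric])
  finally have R2: "(\<Sum>S2\<in>Pp p. \<Sum>R\<in>Pp p. T R S2) = conj k M S (UNIV - H) (UNIV - K)" .
  have cz: "c \<noteq> 0" using d by (simp add: c_def)
  show ?thesis unfolding R1 R2 c_def[symmetric] using cz by (simp add: power_add power2_eq_square field_simps)
qed

theorem proposition4p1:
  fixes \<Gamma> :: "'n::{finite,linorder} blk set"
    and A :: "nat \<Rightarrow> ((complex, 'n) vec, 'n) vec \<Rightarrow> ((complex, 'n) vec, 'n) vec"
    and k :: nat
  assumes "CARD('n) \<ge> 2"
    and "1 \<le> k" and "k < CARD('n)"
    and "congruence_subgroup \<Gamma>"
    and "\<And>i. 1 \<le> i \<Longrightarrow> i \<le> k \<Longrightarrow> modular_rho1 \<Gamma> (A i)"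
  shows "\<forall>\<gamma>\<in>\<Gamma>. \<forall>\<tau>\<in>siegel.
    (let M = aut_factor \<gamma> \<tau>; p = CARD('n) - k; W = ext_pow p M in
      \<forall>H\<in>Pp p. \<forall>K\<in>Pp p.
        star_prod (\<lambda>i. A i (sp_act \<gamma> \<tau>)) k H K =
        det M ^ (k + 2) *
          wmult p (wmult p (winv p (wtrans W)) (star_prod (\<lambda>i. A i \<tau>) k)) (winv p W) H K)"
proof (intro ballI)
  fix \<gamma> :: "'n blk" and \<tau> :: "((complex, 'n) vec, 'n) vec" assume g: "\<gamma> \<in> \<Gamma>" and t: "\<tau> \<in> siegel"
  define M where "M = aut_factor \<gamma> \<tau>"
  define p where "p = CARD('n) - k"
  have cc: "CARD('n) = p + k" using assms(3) by (simp add: p_def)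
  have gS: "\<gamma> \<in> Sp" using g assms(4) by (auto simp: congruence_subgroup_def subgroup_Sp_def)
  have d: "det M \<noteq> 0" unfolding M_def by (rule det_aut_nz[OF gS t])
  define A' where "A' = (\<lambda>i. A i (sp_act \<gamma> \<tau>))"
  define At where "At = (\<lambda>i. A i \<tau>)"
  have A'eq: "A' i = cscale (det M) (M ** At i ** transpose M)" if "1 \<le> i" "i \<le> k" for i
    using assms(5)[OF that] g t unfolding modular_rho1_def A'_def At_def M_def by auto
  obtain n where kn: "k = Suc n" using assms(2) by (cases k) auto
  have SP0: "Suc n \<le> k \<Longrightarrow> sqcap_prod A' (Suc n) = (\<lambda>H K. det M ^ (Suc n) * conj (Suc n) M (sqcap_prod At (Suc n)) H K)"
    by (rule sqcap_prod_conj) (rule A'eq)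
  have SP: "sqcap_prod A' k = (\<lambda>H K. det M ^ k * conj k M (sqcap_prod At k) H K)"
    using SP0 kn by simp
  have W1: "winv p (ext_pow p M) = Zm M p" by (rule winv_unique[OF isinv_Zm[OF d]])
  have W2: "winv p (wtrans (ext_pow p M)) = wtrans (Zm M p)" by (rule winv_unique[OF isinv_trans[OF isinv_Zm[OF d]]])
  have starAt: "star_prod At k = (\<lambda>I J. if I \<in> Pp p \<and> J \<in> Pp p then (-1)^(sum_elems I + sum_elems J) * sqcap_prod At k (UNIV - I) (UNIV - J) else 0)"
    unfolding star_prod_def p_def ..
  show "let M = aut_factor \<gamma> \<tau>; p = CARD('n) - k; W = ext_pow p M in
      \<forall>H\<in>Pp p. \<forall>K\<in>Pp p.
        star_prod (\<lambda>i. A i (sp_act \<gamma> \<tau>)) k H K =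
        det M ^ (k + 2) * wmult p (wmult p (winv p (wtrans W)) (star_prod (\<lambda>i. A i \<tau>) k)) (winv p W) H K"
    unfolding Let_def M_def[symmetric] p_def[symmetric] A'_def[symmetric] At_def[symmetric]
  proof (intro ballI)
    fix H K :: "'n set" assume H: "H \<in> Pp p" and K: "K \<in> Pp p"
    have "star_prod A' k H K = (-1)^(sum_elems H + sum_elems K) * (det M ^ k * conj k M (sqcap_prod At k) (UNIV - H) (UNIV - K))"
      using H K unfolding star_prod_def p_def[symmetric] SP by simp
    also have "\<dots> = det M ^ (k + 2) * wmult p (wmult p (wtrans (Zm M p)) (star_prod At k)) (Zm M p) H K"
      unfolding starAt by (rule main_identity[OF d cc H K])
    finally show "star_prod A' k H K = det M ^ (k + 2) * wmult p (wmult p (winv p (wtrans (ext_pow p M))) (star_prod At k)) (winv p (ext_pow p M)) H K"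
      unfolding W1 W2 .
  qed
qed

end
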